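(* Let $[f_{ij}]$ be a $p\times t$ matrix with entries $f_{ij}\in k[x,y]$, and let $D\subset k\times k$ be an infinite set. For $l\in\{0,1,\dots,p\}$, $(\lambda,\mu)\in D$ and $\mathcal F_l=\{m,n,F,G,N_1,\dots,N_l\}$, where $m,n\ge1$, $F\in k^{m\times m}$ and $G\in k^{n\times n}$ are nilpotent upper triangular matrices and $N_1,\dots,N_l\in k^{m\times n}$, let $\mathcal S_l(\lambda,\mu,\mathcal F_l)$ be the system of matrix equations $$X_1^{f_{i1}}+\dots+X_t^{f_{it}}=N_i,\qquad i=1,\dots,l,$$ in unknowns $X_1,\dots,X_t\in k^{m\times n}$ (empty if $l=0$), where $X^f=\sum a_{ij}L^iXR^j$ for $f=\sum a_{ij}x^iy^j$, with $L=\lambda I_m+F$, $R=\mu I_n+G$. Suppose that for every $(\lambda,\mu)\in D$ there exists $\mathcal F_p$ such that $\mathcal S_p(\lambda,\mu,\mathcal F_p)$ is unsolvable. Then there exist an infinite set $D'\subset D$, a polynomial $d\in k[x,y]$ vanishing on $D'$, an integer $w$ with $0\le w\le\min(p-1,t)$, and pairwise distinct $j_1,\dots,j_{t-w}\in\{1,\dots,t\}$ such that: (i) for every $(\lambda,\mu)\in D'$ and every $\mathcal F_w$, the system $\mathcal S_w(\lambda,\mu,\mathcal F_w)$ is solvable, and every $(t-w)$-tuple $S_{j_1},\dots,S_{j_{t-w}}\in k^{m\times n}$ extends uniquely to a solution $(S_1,\dots,S_t)$ of it; (ii) for every $(\lambda,\mu)\in D'$, every $\mathcal F^0_w=\{m,n,F,G,0,\dots,0\}$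 and every solution $(S_1,\dots,S_t)$ of $\mathcal S_w(\lambda,\mu,\mathcal F^0_w)$, there exists a matrix $S\in k^{m\times n}$ such that $S_1^{f_{w+1,1}}+\dots+S_t^{f_{w+1,t}}=S^d$.
   Context: $k$ is an algebraically closed field. For $L=\lambda I_m+F$, $R=\mu I_n+G$ as in the claim, $A\in k^{m\times n}$ and $f=\sum_{i,j\ge0}a_{ij}x^iy^j\in k[x,y]$, the notation $A^f$ means $\sum_{i,j}a_{ij}L^iAR^j$. *)

theory Defs
  imports "Jordan_Normal_Form.Matrix" "HOL-Computational_Algebra.Polynomial"
begin

text \<open>Bivariate polynomials f in k[x,y] are represented as elements of type 'a poly poly:
  the outer variable is y and the inner variable is x, i.e.
  f = sum_{i,j} a_ij x^i y^j with a_ij = coeff (coeff f j) i.\<close>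

definition eval2 :: "'a::comm_ring_1 poly poly \<Rightarrow> 'a \<Rightarrow> 'a \<Rightarrow> 'a" where
  "eval2 f a b = poly (map_poly (\<lambda>q. poly q a) f) b"

definition polyapp :: "'a::comm_ring_1 mat \<Rightarrow> 'a mat \<Rightarrow> 'a poly poly \<Rightarrow> 'a mat \<Rightarrow> 'a mat" where
  "polyapp L R f A = mat (dim_row A) (dim_col A)
     (\<lambda>rc. \<Sum>j\<le>degree f. \<Sum>i\<le>degree (coeff f j).
        coeff (coeff f j) i * ((L ^\<^sub>m i) * A * (R ^\<^sub>m j)) $$ rc)"

definition nilpotent_mat :: "'a::comm_ring_1 mat \<Rightarrow> bool" where
  "nilpotent_mat A \<longleftrightarrow> (\<exists>k. A ^\<^sub>m k = 0\<^sub>m (dim_row A) (dim_col A))"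

definition admissible :: "nat \<Rightarrow> nat \<Rightarrow> 'a::comm_ring_1 mat \<Rightarrow> 'a mat \<Rightarrow> bool" where
  "admissible m n F G \<longleftrightarrow> m \<ge> 1 \<and> n \<ge> 1 \<and> F \<in> carrier_mat m m \<and> G \<in> carrier_mat n n
     \<and> upper_triangular F \<and> upper_triangular G \<and> nilpotent_mat F \<and> nilpotent_mat G"

definition sys_lhs :: "(nat \<Rightarrow> nat \<Rightarrow> 'a::comm_ring_1 poly poly) \<Rightarrow> nat \<Rightarrow> nat \<Rightarrow>
    'a \<Rightarrow> 'a \<Rightarrow> nat \<Rightarrow> nat \<Rightarrow> 'a mat \<Rightarrow> 'a mat \<Rightarrow> (nat \<Rightarrow> 'a mat) \<Rightarrow> 'a mat" where
  "sys_lhs fs t i lam mu m n F G X = mat m n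
     (\<lambda>rc. \<Sum>j\<in>{1..t}. polyapp (lam \<cdot>\<^sub>m 1\<^sub>m m + F) (mu \<cdot>\<^sub>m 1\<^sub>m n + G) (fs i j) (X j) $$ rc)"

definition is_solution :: "(nat \<Rightarrow> nat \<Rightarrow> 'a::comm_ring_1 poly poly) \<Rightarrow> nat \<Rightarrow> nat \<Rightarrow>
    'a \<Rightarrow> 'a \<Rightarrow> nat \<Rightarrow> nat \<Rightarrow> 'a mat \<Rightarrow> 'a mat \<Rightarrow> (nat \<Rightarrow> 'a mat) \<Rightarrow> (nat \<Rightarrow> 'a mat) \<Rightarrow> bool" where
  "is_solution fs t l lam mu m n F G N X \<longleftrightarrow>
     (\<forall>j\<in>{1..t}. X j \<in> carrier_mat m n) \<and>
     (\<forall>i\<in>{1..l}. sys_lhs fs t i lam mu m n F G X = N i)"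

definition solvable :: "(nat \<Rightarrow> nat \<Rightarrow> 'a::comm_ring_1 poly poly) \<Rightarrow> nat \<Rightarrow> nat \<Rightarrow>
    'a \<Rightarrow> 'a \<Rightarrow> nat \<Rightarrow> nat \<Rightarrow> 'a mat \<Rightarrow> 'a mat \<Rightarrow> (nat \<Rightarrow> 'a mat) \<Rightarrow> bool" where
  "solvable fs t l lam mu m n F G N \<longleftrightarrow> (\<exists>X. is_solution fs t l lam mu m n F G N X)"

end

theory Submission
  imports Defs "Jordan_Normal_Form.Determinant" "HOL-Computational_Algebra.Polynomial_Factorial"
    "HOL-Computational_Algebra.Field_as_Ring"
begin

section \<open>A copy of a field with gcd structure\<close>

typedef 'a fc = "UNIV :: 'a set" by simp
setup_lifting type_definition_fc

instantiation fc :: (field) field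
begin
lift_definition zero_fc :: "'a fc" is 0 .
lift_definition one_fc :: "'a fc" is 1 .
lift_definition plus_fc :: "'a fc \<Rightarrow> 'a fc \<Rightarrow> 'a fc" is "(+)" .
lift_definition minus_fc :: "'a fc \<Rightarrow> 'a fc \<Rightarrow> 'a fc" is "(-)" .
lift_definition uminus_fc :: "'a fc \<Rightarrow> 'a fc" is "uminus" .
lift_definition times_fc :: "'a fc \<Rightarrow> 'a fc \<Rightarrow> 'a fc" is "(*)" .
lift_definition inverse_fc :: "'a fc \<Rightarrow> 'a fc" is "inverse" .
lift_definition divide_fc :: "'a fc \<Rightarrow> 'a fc \<Rightarrow> 'a fc" is "(/)" .
instance by standard (transfer; simp add: algebra_simps divide_inverse)+
end

instantiation fc :: (field)
  "{unique_euclidean_ring, normalization_euclidean_semiring, normalization_semidom_multiplicative}"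
begin
definition [simp]: "normalize_fc = (normalize_field :: 'a fc \<Rightarrow> _)"
definition [simp]: "unit_factor_fc = (unit_factor_field :: 'a fc \<Rightarrow> _)"
definition [simp]: "modulo_fc = (mod_field :: 'a fc \<Rightarrow> _)"
definition [simp]: "euclidean_size_fc = (euclidean_size_field :: 'a fc \<Rightarrow> _)"
definition [simp]: "division_segment (x :: 'a fc) = 1"
instance
  by standard
    (simp_all add: dvd_field_iff field_split_simps split: if_splits)
end

instantiation fc :: (field) euclidean_ring_gcd
begin
definition gcd_fc :: "'a fc \<Rightarrow> 'a fc \<Rightarrow> 'a fc" where
  "gcd_fc = Euclidean_Algorithm.gcd"
definition lcm_fc :: "'a fc \<Rightarrow> 'a fc \<Rightarrow> 'a fc" where
  "lcm_fc = Euclidean_Algorithm.lcm"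
definition Gcd_fc :: "'a fc set \<Rightarrow> 'a fc" where
 "Gcd_fc = Euclidean_Algorithm.Gcd"
definition Lcm_fc :: "'a fc set \<Rightarrow> 'a fc" where
 "Lcm_fc = Euclidean_Algorithm.Lcm"
instance by standard (simp_all add: gcd_fc_def lcm_fc_def Gcd_fc_def Lcm_fc_def)
end

instance fc :: (field) field_gcd ..

section \<open>Evaluation of bivariate polynomials\<close>

lemma eval2_alt: "eval2 f a b = poly (poly f [:b:]) a"
  unfolding eval2_def
proof (induction f)
  case 0
  then show ?case by simp
next
  case (pCons c f)
  have "map_poly (\<lambda>q. poly q a) (pCons c f) = pCons (poly c a) (map_poly (\<lambda>q. poly q a) f)"
    by (simp add: map_poly_pCons)
  then show ?case using pCons by simp
qed

lemma eval2_mult: "eval2 (f * g) a b = eval2 f a b * eval2 g a b"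
  by (simp add: eval2_alt)
lemma eval2_add: "eval2 (f + g) a b = eval2 f a b + eval2 g a b"
  by (simp add: eval2_alt)
lemma eval2_const: "eval2 [:c:] a b = poly c a"
  by (simp add: eval2_alt)
lemma eval2_1: "eval2 1 a b = 1"
  by (simp add: eval2_alt)
lemma eval2_0: "eval2 0 a b = 0"
  by (simp add: eval2_alt)

lemma eval2_unit: "(f::'a::comm_ring_1 poly poly) dvd 1 \<Longrightarrow> eval2 f a b \<noteq> 0"
proof -
  assume "f dvd 1"
  then obtain g where "1 = f * g" by (auto elim: dvdE)
  then have "1 = eval2 f a b * eval2 g a b" by (metis eval2_1 eval2_mult)
  then show ?thesis by auto
qed

lemma eval2_dvd: "f dvd g \<Longrightarrow> eval2 f a b = 0 \<Longrightarrow> eval2 g a b = 0"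
  by (auto elim!: dvdE simp: eval2_mult)


lemma eval2_smult: "eval2 (smult c f) a b = poly c a * eval2 f a b"
  by (simp add: eval2_alt)

lemma vertical_dvd:
  fixes a :: "'a::field poly poly"
  assumes "infinite {\<mu>. eval2 a l \<mu> = 0}"
  shows "[:[:-l,1:]:] dvd a"
proof -
  have "map_poly (\<lambda>q. poly q l) a = 0"
    using assms poly_roots_finite[of "map_poly (\<lambda>q. poly q l) a"] unfolding eval2_def by auto
  then have z: "poly (coeff a j) l = 0" for j
    by (metis coeff_0 coeff_map_poly poly_0)
  have "a = [:[:-l,1:]:] * map_poly (\<lambda>q. q div [:-l,1:]) a"
  proof (rule poly_eqI)
    fix n
    have "[:-l,1:] dvd coeff a n" using z poly_eq_0_iff_dvd by blast
    have e: "[:[:-l,1:]:] * map_poly (\<lambda>q. q div [:-l,1:]) a = smult [:-l,1:] (map_poly (\<lambda>q. q div [:-l,1:]) a)"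
      by simp
    have "coeff (smult [:-l,1:] (map_poly (\<lambda>q. q div [:-l,1:]) a)) n = [:-l,1:] * (coeff a n div [:-l,1:])"
      by (subst coeff_smult, subst coeff_map_poly, simp_all)
    also have "\<dots> = coeff a n" using \<open>[:-l,1:] dvd coeff a n\<close> by (rule dvd_mult_div_cancel)
    finally show "coeff a n = coeff ([:[:-l,1:]:] * map_poly (\<lambda>q. q div [:-l,1:]) a) n"
      by (simp only: e)
  qed
  then show ?thesis by (metis dvd_triv_left)
qed

lemma vertical_not_unit: "\<not> ([:[:-l,1:]:] :: 'a::field poly poly) dvd 1"
  by (simp add: is_unit_poly_iff)

lemma pair_finite:
  fixes a b :: "'b::field_gcd poly poly"
  assumes "coprime a b"
  shows "finite {(x,y). eval2 a x y = 0 \<and> eval2 b x y = 0}"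
  using assms
proof (induction "degree a + degree b" arbitrary: a b rule: less_induct)
  case less
  define T where "T a b = {(x,y). eval2 a x y = 0 \<and> eval2 b x y = 0}" for a b :: "'b poly poly"
  have line: "finite {y. (x,y) \<in> T a b}" if cp: "coprime a b" for a b x
  proof (rule ccontr)
    assume inf: "infinite {y. (x,y) \<in> T a b}"
    have "infinite {y. eval2 a x y = 0}"
      by (rule infinite_super[OF _ inf]) (auto simp: T_def)
    then have 1: "[:[:-x,1:]:] dvd a" by (rule vertical_dvd)
    have "infinite {y. eval2 b x y = 0}"
      by (rule infinite_super[OF _ inf]) (auto simp: T_def)
    then have 2: "[:[:-x,1:]:] dvd b" by (rule vertical_dvd)
    from coprime_common_divisor[OF cp 1 2] vertical_not_unit show False by blast
  qed
  have lines: "finite (T a b \<inter> {(x,y). x \<in> X})" if "finite X" "coprime a b" for a b X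
  proof -
    have "T a b \<inter> {(x,y). x \<in> X} \<subseteq> (\<Union>x\<in>X. (\<lambda>y. (x,y)) ` {y. (x,y) \<in> T a b})"
      by auto
    moreover have "finite (\<Union>x\<in>X. (\<lambda>y. (x,y)) ` {y. (x,y) \<in> T a b})"
      using that line by auto
    ultimately show ?thesis by (rule finite_subset)
  qed
  have main: "finite (T a b)" if cp: "coprime a b" and le: "degree b \<le> degree a"
    and IH: "\<And>a' b'. degree a' + degree b' < degree a + degree b \<Longrightarrow> coprime a' b' \<Longrightarrow> finite (T a' b')"
    for a b
  proof (cases "b = 0")
    case True
    then have "a dvd 1" using cp by simp
    then have "T a b = {}" by (auto simp: T_def dest: eval2_unit)
    then show ?thesis by simp
  next
    case bnz: False
    show ?thesis
    proof (cases "degree b = 0")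
      case True
      then obtain c where bc: "b = [:c:]" by (metis degree_eq_zeroE)
      with bnz have cnz: "c \<noteq> 0" by auto
      have "T a b = T a b \<inter> {(x,y). x \<in> {x. poly c x = 0}}"
        by (auto simp: T_def bc eval2_const)
      then show ?thesis using lines[OF poly_roots_finite[OF cnz] cp] by simp
    next
      case degb: False
      obtain c q where c: "c \<noteq> 0" "smult c a = b * q + pseudo_mod a b"
        using pseudo_mod(1)[OF bnz, of a] by blast
      define r where "r = pseudo_mod a b"
      have rdeg: "r = 0 \<or> degree r < degree b" using pseudo_mod(2)[OF bnz, of a] r_def by simp
      define g where "g = gcd b r"
      have gnz: "g \<noteq> 0" using bnz by (simp add: g_def)
      obtain b' r' where bb: "b = b' * g" and rr: "r = r' * g" and cp': "coprime b' r'"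
        using gcd_coprime_exists[of b r] gnz unfolding g_def by blast
      have "degree b' \<le> degree b" using bb bnz gnz by (simp add: degree_mult_eq)
      moreover have "degree r' < degree b"
      proof (cases "r = 0")
        case True then show ?thesis using rr gnz degb by simp
      next
        case False
        then have "degree r' \<le> degree r" using rr gnz by (auto simp add: degree_mult_eq)
        then show ?thesis using rdeg False by simp
      qed
      ultimately have "degree b' + degree r' < degree a + degree b" using le by simp
      from IH[OF this cp'] have fin: "finite (T b' r')" .
      have gdvd: "g dvd [:c:]"
      proof -
        have "g dvd b" "g dvd r" by (simp_all add: g_def)
        then have "g dvd smult c a" using c(2) r_def by simp
        then have "g dvd [:c:] * a" by simp
        moreover have "coprime g a"
          using cp bb by (simp add: coprime_commute)
        ultimately show ?thesis using coprime_dvd_mult_left_iff by blast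
      qed
      have "T a b \<subseteq> (T a b \<inter> {(x,y). x \<in> {x. poly c x = 0}}) \<union> T b' r'"
      proof
        fix P assume P: "P \<in> T a b"
        obtain x y where Pxy: "P = (x,y)" by (cases P)
        show "P \<in> (T a b \<inter> {(x,y). x \<in> {x. poly c x = 0}}) \<union> T b' r'"
        proof (cases "poly c x = 0")
          case True then show ?thesis using P Pxy by auto
        next
          case False
          have "eval2 a x y = 0" "eval2 b x y = 0" using P Pxy by (auto simp: T_def)
          moreover have "eval2 (smult c a) x y = eval2 (b*q + r) x y" using c(2) r_def by simp
          ultimately have "eval2 r x y = 0"
            by (simp add: eval2_add eval2_mult eval2_smult)
          moreover have "eval2 g x y \<noteq> 0"
            using eval2_dvd[OF gdvd] False by (auto simp: eval2_const)
          ultimately have "P \<in> T b' r'"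
            using \<open>eval2 b x y = 0\<close> Pxy bb rr by (auto simp: T_def eval2_mult)
          then show ?thesis by simp
        qed
      qed
      then show ?thesis using lines[OF poly_roots_finite[OF c(1)] cp] fin
        by (meson finite_UnI finite_subset)
    qed
  qed
  show ?case
  proof (cases "degree b \<le> degree a")
    case True
    show ?thesis using main[OF less.prems True] less.hyps unfolding T_def by blast
  next
    case False
    have "finite (T b a)"
      using main[of b a] less.hyps less.prems False unfolding T_def
      by (simp add: coprime_commute add.commute)
    moreover have "T b a = T a b" unfolding T_def by auto
    ultimately show ?thesis unfolding T_def by simp
  qed
qed


lemma common_div_fc:
  fixes g :: "nat \<Rightarrow> 'b::field_gcd poly poly"
  assumes "finite J" "infinite S" "\<forall>j\<in>J. \<forall>(x,y)\<in>S. eval2 (g j) x y = 0"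
  shows "\<exists>d. (\<forall>j\<in>J. d dvd g j) \<and> infinite {(x,y)\<in>S. eval2 d x y = 0}"
  using assms(1,3)
proof (induction J rule: finite_induct)
  case empty
  have "{(x,y)\<in>S. eval2 0 x y = 0} = S" by (auto simp: eval2_0)
  then show ?case using assms(2) by (intro exI[of _ 0]) simp
next
  case (insert j J)
  have "\<forall>j\<in>J. \<forall>(x,y)\<in>S. eval2 (g j) x y = 0" using insert.prems by blast
  then obtain d0 where d0: "\<forall>i\<in>J. d0 dvd g i" "infinite {(x,y)\<in>S. eval2 d0 x y = 0}"
    using insert.IH by blast
  define S0 where "S0 = {(x,y)\<in>S. eval2 d0 x y = 0}"
  show ?case
  proof (cases "gcd d0 (g j) = 0")
    case True
    then have "d0 = 0" "g j = 0" by auto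
    then show ?thesis using d0 by (intro exI[of _ 0]) auto
  next
    case False
    define d where "d = gcd d0 (g j)"
    obtain a' b' where ab: "d0 = a' * d" "g j = b' * d" "coprime a' b'"
      using gcd_coprime_exists[OF False] unfolding d_def by blast
    have fin: "finite {(x,y). eval2 a' x y = 0 \<and> eval2 b' x y = 0}"
      by (rule pair_finite[OF ab(3)])
    have "S0 - {(x,y). eval2 a' x y = 0 \<and> eval2 b' x y = 0} \<subseteq> {(x,y)\<in>S. eval2 d x y = 0}"
    proof
      fix P assume P: "P \<in> S0 - {(x,y). eval2 a' x y = 0 \<and> eval2 b' x y = 0}"
      obtain x y where Pxy: "P = (x,y)" by (cases P)
      have "eval2 d0 x y = 0" "(x,y) \<in> S" using P Pxy by (auto simp: S0_def)
      moreover have "eval2 (g j) x y = 0" using insert.prems \<open>(x,y) \<in> S\<close> by auto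
      moreover have "eval2 a' x y \<noteq> 0 \<or> eval2 b' x y \<noteq> 0" using P Pxy by auto
      ultimately have "eval2 d x y = 0" using ab by (auto simp: eval2_mult)
      then show "P \<in> {(x,y)\<in>S. eval2 d x y = 0}" using Pxy \<open>(x,y) \<in> S\<close> by simp
    qed
    moreover have "infinite (S0 - {(x,y). eval2 a' x y = 0 \<and> eval2 b' x y = 0})"
      using d0(2) fin unfolding S0_def by (rule Diff_infinite_finite[rotated])
    ultimately have "infinite {(x,y)\<in>S. eval2 d x y = 0}" by (rule infinite_super)
    moreover have "\<forall>i\<in>insert j J. d dvd g i"
    proof
      fix i assume "i \<in> insert j J"
      then show "d dvd g i"
      proof
        assume "i = j" then show ?thesis by (simp add: d_def)
      next
        assume "i \<in> J" then have "d0 dvd g i" using d0(1) by blast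
        moreover have "d dvd d0" by (simp add: d_def)
        ultimately show ?thesis by (rule dvd_trans[rotated])
      qed
    qed
    ultimately show ?thesis by blast
  qed
qed


section \<open>Transfer between 'a and 'a fc\<close>

lemma map_poly_add_hom:
  assumes "h 0 = 0" "\<And>x y. h (x + y) = h x + h y"
  shows "map_poly h (p + q) = map_poly h p + map_poly h q"
  by (rule poly_eqI) (simp add: coeff_map_poly assms)

lemma hom_sum:
  assumes "h 0 = 0" "\<And>x y. h (x + y) = h x + h y"
  shows "h (sum f A) = sum (\<lambda>i. h (f i)) A"
  by (induction A rule: infinite_finite_induct) (simp_all add: assms)

lemma map_poly_mult_hom:
  fixes h :: "'x::comm_semiring_0 \<Rightarrow> 'y::comm_semiring_0"
  assumes "h 0 = 0" "\<And>x y. h (x + y) = h x + h y" "\<And>x y. h (x * y) = h x * h y"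
  shows "map_poly h (p * q) = map_poly h p * map_poly h q"
proof (rule poly_eqI)
  fix n
  have "coeff (map_poly h (p * q)) n = h (\<Sum>i\<le>n. coeff p i * coeff q (n - i))"
    by (simp add: coeff_map_poly coeff_mult assms(1))
  also have "\<dots> = (\<Sum>i\<le>n. h (coeff p i * coeff q (n - i)))"
    by (rule hom_sum[OF assms(1,2)])
  also have "\<dots> = coeff (map_poly h p * map_poly h q) n"
    by (simp add: coeff_map_poly coeff_mult assms)
  finally show "coeff (map_poly h (p * q)) n = coeff (map_poly h p * map_poly h q) n" .
qed

lemma poly_map_poly_hom:
  assumes "h 0 = 0" "\<And>x y. h (x + y) = h x + h y" "\<And>x y. h (x * y) = h x * h y"
  shows "poly (map_poly h p) (h x) = h (poly p x)"
proof (induction p)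
  case 0 then show ?case by (simp add: assms)
next
  case (pCons c p)
  then have "map_poly h (pCons c p) = pCons (h c) (map_poly h p)"
    using assms(1) by (simp add: map_poly_pCons)
  then show ?case using pCons by (simp add: assms)
qed

definition Rp :: "'a::field fc poly poly \<Rightarrow> 'a poly poly" where
  "Rp = map_poly (map_poly Rep_fc)"
definition Ab :: "'a::field poly poly \<Rightarrow> 'a fc poly poly" where
  "Ab = map_poly (map_poly Abs_fc)"

lemma Rep_fc_hom: "Rep_fc 0 = 0" "Rep_fc (x + y) = Rep_fc x + Rep_fc y"
  "Rep_fc (x * y) = Rep_fc x * Rep_fc y" "Rep_fc 1 = 1"
  by (simp_all add: zero_fc.rep_eq plus_fc.rep_eq times_fc.rep_eq one_fc.rep_eq)

lemma mpRep_hom: "map_poly Rep_fc 0 = 0"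
  "map_poly Rep_fc (p + q) = map_poly Rep_fc p + map_poly Rep_fc q"
  "map_poly Rep_fc (p * q) = map_poly Rep_fc p * map_poly Rep_fc q"
  by (simp_all add: map_poly_add_hom map_poly_mult_hom Rep_fc_hom)

lemma Rp_mult: "Rp (p * q) = Rp p * Rp q"
  unfolding Rp_def by (rule map_poly_mult_hom) (simp_all add: mpRep_hom)

lemma Rp_Ab: "Rp (Ab f) = f"
  unfolding Rp_def Ab_def
  by (simp add: map_poly_map_poly o_def Abs_fc_inverse Abs_fc_inject zero_fc_def)

lemma eval2_Rp: "eval2 (Rp f) (Rep_fc u) (Rep_fc v) = Rep_fc (eval2 f u v)"
proof -
  have "poly (map_poly Rep_fc q) (Rep_fc u) = Rep_fc (poly q u)" for q
    by (rule poly_map_poly_hom) (simp_all add: Rep_fc_hom)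
  then have "map_poly (\<lambda>q. poly q (Rep_fc u)) (Rp f) = map_poly Rep_fc (map_poly (\<lambda>q. poly q u) f)"
    unfolding Rp_def by (simp add: map_poly_map_poly o_def Rep_fc_hom)
  then show ?thesis unfolding eval2_def
    by (simp add: poly_map_poly_hom Rep_fc_hom)
qed

lemma eval2_Ab: "eval2 g x y = 0 \<longleftrightarrow> eval2 (Ab g) (Abs_fc x) (Abs_fc y) = 0"
proof -
  have "eval2 g x y = eval2 (Rp (Ab g)) (Rep_fc (Abs_fc x)) (Rep_fc (Abs_fc y))"
    by (simp add: Rp_Ab Abs_fc_inverse)
  also have "\<dots> = Rep_fc (eval2 (Ab g) (Abs_fc x) (Abs_fc y))" by (rule eval2_Rp)
  finally show ?thesis by (metis Rep_fc_hom(1) Rep_fc_inject)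
qed

lemma eval2_Rp0: "eval2 (Rp d) x y = 0 \<longleftrightarrow> eval2 d (Abs_fc x) (Abs_fc y) = 0"
  using eval2_Rp[of d "Abs_fc x" "Abs_fc y"]
  by (metis Abs_fc_inverse Rep_fc_hom(1) Rep_fc_inject UNIV_I)

lemma common_div:
  fixes g :: "nat \<Rightarrow> 'a::field poly poly"
  assumes "finite J" "infinite S" "\<forall>j\<in>J. \<forall>(x,y)\<in>S. eval2 (g j) x y = 0"
  shows "\<exists>d. (\<forall>j\<in>J. d dvd g j) \<and> infinite {(x,y)\<in>S. eval2 d x y = 0}"
proof -
  define f :: "'a \<times> 'a \<Rightarrow> 'a fc \<times> 'a fc" where "f = (\<lambda>(x,y). (Abs_fc x, Abs_fc y))"
  have injf: "inj f" unfolding f_def inj_def by (auto simp: Abs_fc_inject)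
  have inf: "infinite (f ` S)" using assms(2) injf by (simp add: finite_image_iff inj_on_subset)
  have vanish: "\<forall>j\<in>J. \<forall>(x,y)\<in>f ` S. eval2 (Ab (g j)) x y = 0"
  proof (intro ballI)
    fix j P assume j: "j \<in> J" and P: "P \<in> f ` S"
    from P obtain x y where xy: "(x,y) \<in> S" "P = (Abs_fc x, Abs_fc y)" unfolding f_def by auto
    have "case (x,y) of (x,y) \<Rightarrow> eval2 (g j) x y = 0" using bspec[OF bspec[OF assms(3) j] xy(1)] .
    then have "eval2 (g j) x y = 0" by simp
    then have "eval2 (Ab (g j)) (Abs_fc x) (Abs_fc y) = 0" using eval2_Ab by blast
    then show "case P of (x,y) \<Rightarrow> eval2 (Ab (g j)) x y = 0" using xy(2) by simp
  qed
  obtain d where d: "\<forall>j\<in>J. d dvd Ab (g j)" "infinite {(x,y)\<in>f ` S. eval2 d x y = 0}"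
    using common_div_fc[OF assms(1) inf vanish] by (elim exE conjE)
  have "\<forall>j\<in>J. Rp d dvd g j"
  proof
    fix j assume "j \<in> J"
    then have "d dvd Ab (g j)" using d(1) by blast
    then obtain q where q: "Ab (g j) = d * q" by (rule dvdE)
    have "g j = Rp (Ab (g j))" by (rule Rp_Ab[symmetric])
    also have "\<dots> = Rp d * Rp q" unfolding q by (rule Rp_mult)
    finally have "g j = Rp d * Rp q" .
    then show "Rp d dvd g j" by simp
  qed
  moreover have sub: "{(x,y)\<in>f ` S. eval2 d x y = 0} \<subseteq> f ` {(x,y)\<in>S. eval2 (Rp d) x y = 0}"
  proof
    fix P assume P: "P \<in> {(x,y)\<in>f ` S. eval2 d x y = 0}"
    then obtain x y where xy: "(x,y) \<in> S" "P = (Abs_fc x, Abs_fc y)" unfolding f_def by auto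
    then have "eval2 d (Abs_fc x) (Abs_fc y) = 0" using P by simp
    then have "eval2 (Rp d) x y = 0" using eval2_Rp0 by blast
    then show "P \<in> f ` {(x,y)\<in>S. eval2 (Rp d) x y = 0}" using xy unfolding f_def by auto
  qed
  moreover have "infinite {(x,y)\<in>S. eval2 (Rp d) x y = 0}"
  proof
    assume "finite {(x,y)\<in>S. eval2 (Rp d) x y = 0}"
    then have "finite (f ` {(x,y)\<in>S. eval2 (Rp d) x y = 0})" by (rule finite_imageI)
    with sub have "finite {(x,y)\<in>f ` S. eval2 d x y = 0}"
      by (rule finite_subset)
    with d(2) show False by contradiction
  qed
  ultimately show ?thesis by (intro exI[of _ "Rp d"]) simp
qed


definition cf :: "'a::comm_ring_1 poly poly \<Rightarrow> nat \<Rightarrow> nat \<Rightarrow> 'a" where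
  "cf f i j = coeff (coeff f j) i"

definition bnd2 :: "'a::comm_ring_1 poly poly \<Rightarrow> nat \<Rightarrow> nat \<Rightarrow> bool" where
  "bnd2 f a b \<longleftrightarrow> (\<forall>i j. (a < i \<or> b < j) \<longrightarrow> cf f i j = 0)"

lemma bnd2_mono: "bnd2 f a b \<Longrightarrow> a \<le> a' \<Longrightarrow> b \<le> b' \<Longrightarrow> bnd2 f a' b'"
  unfolding bnd2_def by auto

lemma bnd2_exists: "\<exists>K. bnd2 f K K"
proof -
  define K where "K = degree f + (\<Sum>j\<le>degree f. degree (coeff f j))"
  have "cf f i j = 0" if "K < i \<or> K < j" for i j
  proof (cases "j \<le> degree f")
    case True
    have "degree (coeff f j) \<le> (\<Sum>j\<le>degree f. degree (coeff f j))"
      by (rule member_le_sum) (use True in auto)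
    then have "degree (coeff f j) \<le> K" unfolding K_def by simp
    then show ?thesis using that True unfolding cf_def K_def by (auto intro: coeff_eq_0)
  next
    case False
    then show ?thesis unfolding cf_def by (simp add: coeff_eq_0)
  qed
  then show ?thesis unfolding bnd2_def by blast
qed

lemma sum_extend_atMost:
  fixes g :: "nat \<Rightarrow> 'b::comm_monoid_add"
  assumes "a \<le> b" "\<And>i. a < i \<Longrightarrow> i \<le> b \<Longrightarrow> g i = 0"
  shows "(\<Sum>i\<le>a. g i) = (\<Sum>i\<le>b. g i)"
  by (rule sum.mono_neutral_left) (use assms in auto)

lemma polyapp_bnd2:
  assumes "bnd2 f a b"
  shows "polyapp L R f A = mat (dim_row A) (dim_col A)
     (\<lambda>rc. \<Sum>j\<le>b. \<Sum>i\<le>a. cf f i j * ((L ^\<^sub>m i) * A * (R ^\<^sub>m j)) $$ rc)"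
proof -
  have degf: "degree f \<le> b"
  proof (rule ccontr)
    assume "\<not> degree f \<le> b"
    then have "b < degree f" by simp
    then have "coeff (coeff f (degree f)) i = 0" for i using assms unfolding bnd2_def cf_def by auto
    then have "coeff f (degree f) = 0" by (simp add: poly_eq_iff)
    then have "f = 0" by simp
    with \<open>b < degree f\<close> show False by simp
  qed
  have degc: "degree (coeff f j) \<le> a" for j
  proof (rule ccontr)
    assume "\<not> degree (coeff f j) \<le> a"
    then have "a < degree (coeff f j)" by simp
    then have "coeff (coeff f j) (degree (coeff f j)) = 0" using assms unfolding bnd2_def cf_def by auto
    then have "coeff f j = 0" by simp
    with \<open>a < degree (coeff f j)\<close> show False by simp
  qed
  show ?thesis unfolding polyapp_def
  proof (rule cong[OF refl, of _ _ "mat _ _"], rule ext)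
    fix rc
    have "(\<Sum>j\<le>degree f. \<Sum>i\<le>degree (coeff f j). coeff (coeff f j) i * (L ^\<^sub>m i * A * R ^\<^sub>m j) $$ rc)
        = (\<Sum>j\<le>degree f. \<Sum>i\<le>a. cf f i j * (L ^\<^sub>m i * A * R ^\<^sub>m j) $$ rc)"
      unfolding cf_def by (rule sum.cong[OF refl], rule sum_extend_atMost[OF degc]) (auto simp: coeff_eq_0)
    also have "\<dots> = (\<Sum>j\<le>b. \<Sum>i\<le>a. cf f i j * (L ^\<^sub>m i * A * R ^\<^sub>m j) $$ rc)"
      by (rule sum_extend_atMost[OF degf]) (auto simp: cf_def coeff_eq_0)
    finally show "(\<Sum>j\<le>degree f. \<Sum>i\<le>degree (coeff f j). coeff (coeff f j) i * (L ^\<^sub>m i * A * R ^\<^sub>m j) $$ rc)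
        = (\<Sum>j\<le>b. \<Sum>i\<le>a. cf f i j * (L ^\<^sub>m i * A * R ^\<^sub>m j) $$ rc)" .
  qed
qed

lemma index_mult_sum:
  assumes "P \<in> carrier_mat a b" "Q \<in> carrier_mat b c" "r < a" "s < c"
  shows "(P * Q) $$ (r,s) = (\<Sum>k<b. P $$ (r,k) * Q $$ (k,s))"
  using assms by (auto simp: scalar_prod_def lessThan_atLeast0 intro!: sum.cong)

lemma polyapp_dims[simp]: "dim_row (polyapp L R f A) = dim_row A" "dim_col (polyapp L R f A) = dim_col A"
  unfolding polyapp_def by simp_all

lemma pow_mat_commute:
  assumes "L \<in> carrier_mat n n"
  shows "L ^\<^sub>m i * L = L * L ^\<^sub>m i"
proof (induction i)
  case 0 then show ?case using assms by simp
next
  case (Suc i)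
  have "L ^\<^sub>m Suc i * L = (L ^\<^sub>m i * L) * L" by simp
  also have "\<dots> = (L * L ^\<^sub>m i) * L" using Suc by simp
  also have "\<dots> = L * (L ^\<^sub>m i * L)" using assms by (simp add: assoc_mult_mat[of _ n n _ n _ n])
  finally show ?case by simp
qed

locale opctx =
  fixes L R :: "'a::comm_ring_1 mat" and m n :: nat
  assumes L: "L \<in> carrier_mat m m" and R: "R \<in> carrier_mat n n"
begin

abbreviation op :: "'a poly poly \<Rightarrow> 'a mat \<Rightarrow> 'a mat" where
  "op f A \<equiv> polyapp L R f A"

definition T :: "nat \<Rightarrow> nat \<Rightarrow> 'a mat \<Rightarrow> 'a mat" where
  "T i j A = L ^\<^sub>m i * A * R ^\<^sub>m j"

lemma T_carrier: "A \<in> carrier_mat m n \<Longrightarrow> T i j A \<in> carrier_mat m n"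
  unfolding T_def using L R by auto

lemma op_carrier: "A \<in> carrier_mat m n \<Longrightarrow> op f A \<in> carrier_mat m n"
  unfolding polyapp_def by auto

lemma op_formula:
  assumes "bnd2 f a b" "A \<in> carrier_mat m n"
  shows "op f A = mat m n (\<lambda>rc. \<Sum>j\<le>b. \<Sum>i\<le>a. cf f i j * T i j A $$ rc)"
  using polyapp_bnd2[OF assms(1), of L R A] assms(2) unfolding T_def by auto

lemma op_entry:
  assumes "bnd2 f a b" "A \<in> carrier_mat m n" "r < m" "c < n"
  shows "op f A $$ (r,c) = (\<Sum>j\<le>b. \<Sum>i\<le>a. cf f i j * T i j A $$ (r,c))"
  using op_formula[OF assms(1,2)] assms(3,4) by simp

lemma T_entry:
  assumes "A \<in> carrier_mat m n" "r < m" "c < n"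
  shows "T i j A $$ (r,c) = (\<Sum>l<n. (\<Sum>k<m. (L ^\<^sub>m i) $$ (r,k) * A $$ (k,l)) * (R ^\<^sub>m j) $$ (l,c))"
proof -
  have 1: "L ^\<^sub>m i * A \<in> carrier_mat m n" using L assms by auto
  have "T i j A $$ (r,c) = (\<Sum>l<n. (L ^\<^sub>m i * A) $$ (r,l) * (R ^\<^sub>m j) $$ (l,c))"
    unfolding T_def by (rule index_mult_sum[OF 1]) (use R assms in auto)
  also have "\<dots> = (\<Sum>l<n. (\<Sum>k<m. (L ^\<^sub>m i) $$ (r,k) * A $$ (k,l)) * (R ^\<^sub>m j) $$ (l,c))"
    by (rule sum.cong[OF refl], subst index_mult_sum[of _ m m _ n]) (use L assms in auto)
  finally show ?thesis .
qed

lemma T_add: "A \<in> carrier_mat m n \<Longrightarrow> B \<in> carrier_mat m n \<Longrightarrow> r < m \<Longrightarrow> c < n \<Longrightarrow>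
  T i j (A + B) $$ (r,c) = T i j A $$ (r,c) + T i j B $$ (r,c)"
  by (simp add: T_entry algebra_simps sum.distrib)

lemma T_smult: "A \<in> carrier_mat m n \<Longrightarrow> r < m \<Longrightarrow> c < n \<Longrightarrow>
  T i j (x \<cdot>\<^sub>m A) $$ (r,c) = x * T i j A $$ (r,c)"
  by (simp add: T_entry algebra_simps sum_distrib_left)

lemma op_add: assumes "A \<in> carrier_mat m n" "B \<in> carrier_mat m n"
  shows "op f (A + B) = op f A + op f B"
proof -
  obtain K where K: "bnd2 f K K" using bnd2_exists by blast
  show ?thesis
    by (rule eq_matI) (use assms in \<open>simp_all add: op_entry[OF K] T_add algebra_simps sum.distrib\<close>)
qed

lemma op_smult: assumes "A \<in> carrier_mat m n"
  shows "op f (x \<cdot>\<^sub>m A) = x \<cdot>\<^sub>m op f A"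
proof -
  obtain K where K: "bnd2 f K K" using bnd2_exists by blast
  show ?thesis
    by (rule eq_matI) (use assms in \<open>simp_all add: op_entry[OF K] T_smult algebra_simps sum_distrib_left\<close>)
qed


lemma op_zero: "op f (0\<^sub>m m n) = 0\<^sub>m m n"
proof -
  have "op f (0 \<cdot>\<^sub>m 0\<^sub>m m n) = 0 \<cdot>\<^sub>m op f (0\<^sub>m m n)" by (rule op_smult) simp
  moreover have "0 \<cdot>\<^sub>m (0\<^sub>m m n :: 'a mat) = 0\<^sub>m m n" by auto
  moreover have "0 \<cdot>\<^sub>m op f (0\<^sub>m m n) = 0\<^sub>m m n" by (rule eq_matI) auto
  ultimately show ?thesis by simp
qed

lemma T_SucR: "A \<in> carrier_mat m n \<Longrightarrow> T i (Suc j) A = T i j A * R"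
proof -
  assume A: "A \<in> carrier_mat m n"
  have P: "L ^\<^sub>m i * A \<in> carrier_mat m n" using L A by auto
  have "T i j A * R = L ^\<^sub>m i * A * (R ^\<^sub>m j * R)"
    unfolding T_def by (rule assoc_mult_mat[OF P _ R]) (use R in auto)
  then show ?thesis unfolding T_def by simp
qed

lemma T_SucL: "A \<in> carrier_mat m n \<Longrightarrow> T (Suc i) j A = L * T i j A"
proof -
  assume A: "A \<in> carrier_mat m n"
  have "L ^\<^sub>m Suc i = L * L ^\<^sub>m i" using pow_mat_commute[OF L] by simp
  have P: "L ^\<^sub>m i \<in> carrier_mat m m" using L by auto
  have "T (Suc i) j A = (L * L ^\<^sub>m i) * A * R ^\<^sub>m j" unfolding T_def by (simp only: \<open>L ^\<^sub>m Suc i = L * L ^\<^sub>m i\<close>)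
  also have "\<dots> = (L * (L ^\<^sub>m i * A)) * R ^\<^sub>m j" by (simp add: assoc_mult_mat[OF L P A])
  also have "\<dots> = L * ((L ^\<^sub>m i * A) * R ^\<^sub>m j)"
    by (rule assoc_mult_mat[OF L]) (use P A R in auto)
  finally show ?thesis unfolding T_def .
qed

end

lemma swap3: "(\<Sum>l\<in>A. \<Sum>j\<in>B. \<Sum>i\<in>C. g i j l) = (\<Sum>j\<in>B. \<Sum>i\<in>C. \<Sum>l\<in>A. g i j l)"
  by (subst sum.swap) (simp add: sum.swap[of _ A])

lemma cf_add: "cf (f + g) i j = cf f i j + cf g i j" by (simp add: cf_def)
lemma cf_smult_const: "cf (smult [:c:] g) i j = c * cf g i j" by (simp add: cf_def)
lemma cf_pCons0: "cf (pCons 0 f) i j = (if j = 0 then 0 else cf f i (j - 1))"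
  by (cases j) (simp_all add: cf_def)
lemma cf_x: "cf (smult [:0,1:] f) i j = (if i = 0 then 0 else cf f (i - 1) j)"
  by (cases i) (simp_all add: cf_def)
lemma cf_one: "cf 1 i j = (if i = 0 \<and> j = 0 then 1 else 0)"
  by (cases i; cases j) (simp_all add: cf_def one_pCons)

lemma bnd2_add: "bnd2 f a b \<Longrightarrow> bnd2 g a b \<Longrightarrow> bnd2 (f + g) a b"
  unfolding bnd2_def by (simp add: cf_add)
lemma bnd2_smult_const: "bnd2 g a b \<Longrightarrow> bnd2 (smult [:c:] g) a b"
  unfolding bnd2_def by (simp add: cf_smult_const)
lemma bnd2_pCons0: "bnd2 f a b \<Longrightarrow> bnd2 (pCons 0 f) a (Suc b)"
  unfolding bnd2_def by (auto simp: cf_pCons0)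
lemma bnd2_x: "bnd2 f a b \<Longrightarrow> bnd2 (smult [:0,1:] f) (Suc a) b"
  unfolding bnd2_def by (auto simp: cf_x)
lemma bnd2_one: "bnd2 1 0 0"
  unfolding bnd2_def by (auto simp: cf_one)
lemma bnd2_zero: "bnd2 0 0 0"
  unfolding bnd2_def by (auto simp: cf_def)

context opctx
begin

lemma op_add_poly: assumes A: "A \<in> carrier_mat m n"
  shows "op (f + g) A = op f A + op g A"
proof -
  obtain K1 where K1: "bnd2 f K1 K1" using bnd2_exists by blast
  obtain K2 where K2: "bnd2 g K2 K2" using bnd2_exists by blast
  define K where "K = max K1 K2"
  have Kf: "bnd2 f K K" using bnd2_mono[OF K1] K_def by simp
  have Kg: "bnd2 g K K" using bnd2_mono[OF K2] K_def by simp
  have Kfg: "bnd2 (f + g) K K" by (rule bnd2_add[OF Kf Kg])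
  show ?thesis
    by (rule eq_matI) (use A op_carrier in \<open>simp_all add: op_entry[OF Kfg] op_entry[OF Kf] op_entry[OF Kg]
         cf_add algebra_simps sum.distrib\<close>)
qed

lemma op_smult_const: assumes A: "A \<in> carrier_mat m n"
  shows "op (smult [:c:] g) A = c \<cdot>\<^sub>m op g A"
proof -
  obtain K where K: "bnd2 g K K" using bnd2_exists by blast
  have K': "bnd2 (smult [:c:] g) K K" by (rule bnd2_smult_const[OF K])
  show ?thesis
    by (rule eq_matI) (use A in \<open>simp_all add: op_entry[OF K] op_entry[OF K']
         cf_smult_const algebra_simps sum_distrib_left\<close>)
qed

lemma op_one: assumes A: "A \<in> carrier_mat m n" shows "op 1 A = A"
proof -
  have "T 0 0 A = A" unfolding T_def using A L R by simp
  then show ?thesis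
    by (intro eq_matI) (use A in \<open>simp_all add: op_entry[OF bnd2_one] cf_one\<close>)
qed

lemma op_0poly: assumes A: "A \<in> carrier_mat m n" shows "op 0 A = 0\<^sub>m m n"
  by (intro eq_matI) (use A in \<open>simp_all add: op_entry[OF bnd2_zero] cf_def\<close>)

lemma op_yshift: assumes A: "A \<in> carrier_mat m n"
  shows "op (pCons 0 f) A = op f A * R"
proof -
  obtain K where K: "bnd2 f K K" using bnd2_exists by blast
  have K': "bnd2 (pCons 0 f) K (Suc K)" by (rule bnd2_pCons0[OF K])
  show ?thesis
  proof (rule eq_matI)
    fix r c assume rc: "r < dim_row (op f A * R)" "c < dim_col (op f A * R)"
    then have r: "r < m" and c: "c < n" using A R by auto
    have "op (pCons 0 f) A $$ (r,c) = (\<Sum>j\<le>Suc K. \<Sum>i\<le>K. cf (pCons 0 f) i j * T i j A $$ (r,c))"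
      by (rule op_entry[OF K' A r c])
    also have "\<dots> = (\<Sum>j\<le>K. \<Sum>i\<le>K. cf f i j * T i (Suc j) A $$ (r,c))"
      by (subst sum.atMost_Suc_shift) (simp add: cf_pCons0)
    also have "\<dots> = (\<Sum>j\<le>K. \<Sum>i\<le>K. cf f i j * (\<Sum>l<n. T i j A $$ (r,l) * R $$ (l,c)))"
      by (intro sum.cong refl, simp add: T_SucR[OF A], subst index_mult_sum[of _ m n _ n])
         (use T_carrier[OF A] R r c in auto)
    also have "\<dots> = (\<Sum>l<n. \<Sum>j\<le>K. \<Sum>i\<le>K. cf f i j * T i j A $$ (r,l) * R $$ (l,c))"
      by (subst swap3) (simp add: sum_distrib_left mult.assoc)
    also have "\<dots> = (\<Sum>l<n. op f A $$ (r,l) * R $$ (l,c))"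
      by (intro sum.cong refl) (simp add: op_entry[OF K A r] sum_distrib_right)
    also have "\<dots> = (op f A * R) $$ (r,c)"
      by (rule index_mult_sum[symmetric]) (use op_carrier[OF A] R r c in auto)
    finally show "op (pCons 0 f) A $$ (r,c) = (op f A * R) $$ (r,c)" .
  qed (use A R in auto)
qed

lemma op_xshift: assumes A: "A \<in> carrier_mat m n"
  shows "op (smult [:0,1:] f) A = L * op f A"
proof -
  obtain K where K: "bnd2 f K K" using bnd2_exists by blast
  have K': "bnd2 (smult [:0,1:] f) (Suc K) K" by (rule bnd2_x[OF K])
  show ?thesis
  proof (rule eq_matI)
    fix r c assume rc: "r < dim_row (L * op f A)" "c < dim_col (L * op f A)"
    then have r: "r < m" and c: "c < n" using A L by auto
    have "op (smult [:0,1:] f) A $$ (r,c) = (\<Sum>j\<le>K. \<Sum>i\<le>Suc K. cf (smult [:0,1:] f) i j * T i j A $$ (r,c))"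
      by (rule op_entry[OF K' A r c])
    also have "\<dots> = (\<Sum>j\<le>K. \<Sum>i\<le>K. cf f i j * T (Suc i) j A $$ (r,c))"
      by (rule sum.cong[OF refl], subst sum.atMost_Suc_shift) (simp add: cf_x)
    also have "\<dots> = (\<Sum>j\<le>K. \<Sum>i\<le>K. cf f i j * (\<Sum>l<m. L $$ (r,l) * T i j A $$ (l,c)))"
      by (intro sum.cong refl, simp add: T_SucL[OF A], subst index_mult_sum[of _ m m _ n])
         (use T_carrier[OF A] L r c in auto)
    also have "\<dots> = (\<Sum>l<m. \<Sum>j\<le>K. \<Sum>i\<le>K. L $$ (r,l) * (cf f i j * T i j A $$ (l,c)))"
      by (subst swap3) (simp add: sum_distrib_left mult.assoc mult.left_commute)
    also have "\<dots> = (\<Sum>l<m. L $$ (r,l) * op f A $$ (l,c))"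
      by (intro sum.cong refl) (simp add: op_entry[OF K A _ c] sum_distrib_left)
    also have "\<dots> = (L * op f A) $$ (r,c)"
      by (rule index_mult_sum[symmetric]) (use op_carrier[OF A] L r c in auto)
    finally show "op (smult [:0,1:] f) A $$ (r,c) = (L * op f A) $$ (r,c)" .
  qed (use A L in auto)
qed

end

context opctx
begin

lemma op_const: assumes A: "A \<in> carrier_mat m n" shows "op [:[:c:]:] A = c \<cdot>\<^sub>m A"
proof -
  have "[:[:c:]:] = smult [:c:] (1 :: 'a poly poly)" by (simp add: one_pCons)
  then show ?thesis using op_smult_const[OF A, of c 1] op_one[OF A] by simp
qed

lemma op_smult_poly: assumes A: "A \<in> carrier_mat m n"
  shows "op (smult a g) A = op [:a:] (op g A)"
proof (induction a)
  case 0
  then show ?case using op_0poly[OF A] op_0poly[OF op_carrier[OF A]] by simp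
next
  case (pCons c a')
  have B: "op g A \<in> carrier_mat m n" by (rule op_carrier[OF A])
  have e1: "smult (pCons c a') g = smult [:c:] g + smult [:0,1:] (smult a' g)"
  proof -
    have "pCons c a' = [:c:] + pCons 0 a'" by simp
    then have "smult (pCons c a') g = smult ([:c:] + pCons 0 a') g"
      by (rule arg_cong[where f="\<lambda>x. smult x g"])
    then have "smult (pCons c a') g = smult [:c:] g + smult (pCons 0 a') g"
      by (simp only: smult_add_left)
    moreover have "smult (pCons 0 a') g = smult [:0,1:] (smult a' g)" by simp
    ultimately show ?thesis by (simp only:)
  qed
  have e2: "[:pCons c a':] = smult [:c:] 1 + smult [:0,1:] [:a':]"
    by (simp add: one_pCons)
  have "op (smult (pCons c a') g) A = c \<cdot>\<^sub>m op g A + L * op [:a':] (op g A)"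
    unfolding e1 by (simp only: op_add_poly[OF A] op_smult_const[OF A] op_xshift[OF A] pCons.IH)
  also have "\<dots> = op [:pCons c a':] (op g A)"
    unfolding e2 by (simp only: op_add_poly[OF B] op_smult_const[OF B] op_xshift[OF B] op_one[OF B])
  finally show ?case .
qed

lemma op_mult_poly: assumes A: "A \<in> carrier_mat m n"
  shows "op (f * g) A = op f (op g A)"
proof (induction f)
  case 0
  then show ?case using op_0poly[OF A] op_0poly[OF op_carrier[OF A]] by simp
next
  case (pCons a f')
  have B: "op g A \<in> carrier_mat m n" by (rule op_carrier[OF A])
  have e: "pCons a f' = [:a:] + pCons 0 f'" by simp
  have "op (pCons a f' * g) A = op (smult a g) A + op (f' * g) A * R"
    by (simp add: op_add_poly[OF A] op_yshift[OF A])
  also have "\<dots> = op [:a:] (op g A) + op f' (op g A) * R"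
    using pCons.IH op_smult_poly[OF A] by simp
  also have "\<dots> = op (pCons a f') (op g A)"
  proof -
    have "op (pCons a f') (op g A) = op ([:a:] + pCons 0 f') (op g A)" using e by simp
    also have "\<dots> = op [:a:] (op g A) + op f' (op g A) * R"
      by (simp only: op_add_poly[OF B] op_yshift[OF B])
    finally show ?thesis by simp
  qed
  finally show ?case .
qed

lemma op_commute: assumes A: "A \<in> carrier_mat m n"
  shows "op f (op g A) = op g (op f A)"
  using op_mult_poly[OF A, of f g] op_mult_poly[OF A, of g f] by (simp add: mult.commute)

lemma op_minus: assumes "A \<in> carrier_mat m n" "B \<in> carrier_mat m n"
  shows "op f (A - B) = op f A - op f B"
proof -
  have "A - B = A + (-1) \<cdot>\<^sub>m B" using assms by auto
  then have "op f (A - B) = op f A + (-1) \<cdot>\<^sub>m op f B"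
    using assms by (simp add: op_add op_smult)
  then show ?thesis using assms op_carrier by auto
qed

lemma op_sub_poly: assumes A: "A \<in> carrier_mat m n"
  shows "op (f - g) A = op f A - op g A"
proof -
  have "op f A = op ((f - g) + g) A" by simp
  also have "\<dots> = op (f - g) A + op g A" by (rule op_add_poly[OF A])
  finally show ?thesis using op_carrier[OF A] by auto
qed

end

definition msum :: "nat \<Rightarrow> nat \<Rightarrow> ('b \<Rightarrow> 'a::comm_ring_1 mat) \<Rightarrow> 'b set \<Rightarrow> 'a mat" where
  "msum m n g J = mat m n (\<lambda>rc. \<Sum>j\<in>J. g j $$ rc)"

lemma msum_carrier[simp]: "msum m n g J \<in> carrier_mat m n"
  unfolding msum_def by simp
lemma msum_dims[simp]: "dim_row (msum m n g J) = m" "dim_col (msum m n g J) = n"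
  unfolding msum_def by simp_all
lemma msum_index: "r < m \<Longrightarrow> c < n \<Longrightarrow> msum m n g J $$ (r,c) = (\<Sum>j\<in>J. g j $$ (r,c))"
  unfolding msum_def by simp

lemma msum_empty: "msum m n g {} = 0\<^sub>m m n"
  by (rule eq_matI) (simp_all add: msum_index)

lemma msum_insert: "finite J \<Longrightarrow> j \<notin> J \<Longrightarrow> g j \<in> carrier_mat m n \<Longrightarrow>
  msum m n g (insert j J) = g j + msum m n g J"
  by (rule eq_matI) (auto simp: msum_index)

lemma msum_cong: "(\<And>j. j \<in> J \<Longrightarrow> g j = h j) \<Longrightarrow> msum m n g J = msum m n h J"
  unfolding msum_def by (auto intro!: sum.cong cong[OF refl, of _ _ "mat m n"])

lemma msum_add: "(\<And>j. j \<in> J \<Longrightarrow> g j \<in> carrier_mat m n) \<Longrightarrow> (\<And>j. j \<in> J \<Longrightarrow> h j \<in> carrier_mat m n) \<Longrightarrow>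
  msum m n (\<lambda>j. g j + h j) J = msum m n g J + msum m n h J"
proof (rule eq_matI)
  fix r c assume as: "\<And>j. j \<in> J \<Longrightarrow> g j \<in> carrier_mat m n" "\<And>j. j \<in> J \<Longrightarrow> h j \<in> carrier_mat m n"
    "r < dim_row (msum m n g J + msum m n h J)" "c < dim_col (msum m n g J + msum m n h J)"
  have "(\<Sum>j\<in>J. (g j + h j) $$ (r,c)) = (\<Sum>j\<in>J. g j $$ (r,c) + h j $$ (r,c))"
  proof (rule sum.cong[OF refl])
    fix j assume "j \<in> J"
    then have "g j \<in> carrier_mat m n" "h j \<in> carrier_mat m n" using as by auto
    then show "(g j + h j) $$ (r,c) = g j $$ (r,c) + h j $$ (r,c)" using as(3,4) by simp
  qed
  then show "msum m n (\<lambda>j. g j + h j) J $$ (r, c) = (msum m n g J + msum m n h J) $$ (r, c)"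
    using as by (simp add: msum_index sum.distrib)
qed auto

lemma msum_minus: "(\<And>j. j \<in> J \<Longrightarrow> g j \<in> carrier_mat m n) \<Longrightarrow> (\<And>j. j \<in> J \<Longrightarrow> h j \<in> carrier_mat m n) \<Longrightarrow>
  msum m n (\<lambda>j. g j - h j) J = msum m n g J - msum m n h J"
proof (rule eq_matI)
  fix r c assume as: "\<And>j. j \<in> J \<Longrightarrow> g j \<in> carrier_mat m n" "\<And>j. j \<in> J \<Longrightarrow> h j \<in> carrier_mat m n"
    "r < dim_row (msum m n g J - msum m n h J)" "c < dim_col (msum m n g J - msum m n h J)"
  have "(\<Sum>j\<in>J. (g j - h j) $$ (r,c)) = (\<Sum>j\<in>J. g j $$ (r,c) - h j $$ (r,c))"
  proof (rule sum.cong[OF refl])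
    fix j assume "j \<in> J"
    then have "g j \<in> carrier_mat m n" "h j \<in> carrier_mat m n" using as by auto
    then show "(g j - h j) $$ (r,c) = g j $$ (r,c) - h j $$ (r,c)" using as(3,4) by simp
  qed
  then show "msum m n (\<lambda>j. g j - h j) J $$ (r, c) = (msum m n g J - msum m n h J) $$ (r, c)"
    using as by (simp add: msum_index sum_subtractf)
qed auto

lemma msum_zero: "(\<And>j. j \<in> J \<Longrightarrow> g j = 0\<^sub>m m n) \<Longrightarrow> msum m n g J = 0\<^sub>m m n"
  by (rule eq_matI) (auto simp: msum_index)

lemma msum_swap:
  "msum m n (\<lambda>a. msum m n (\<lambda>b. g a b) J2) J1 = msum m n (\<lambda>b. msum m n (\<lambda>a. g a b) J1) J2"
  by (rule eq_matI) (simp_all add: msum_index sum.swap[of _ J1])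

lemma msum_reindex: "inj_on h J \<Longrightarrow> msum m n g (h ` J) = msum m n (\<lambda>j. g (h j)) J"
  unfolding msum_def by (simp add: sum.reindex)

lemma msum_union: "finite A \<Longrightarrow> finite B \<Longrightarrow> A \<inter> B = {} \<Longrightarrow>
  (\<And>j. j \<in> A \<union> B \<Longrightarrow> g j \<in> carrier_mat m n) \<Longrightarrow>
  msum m n g (A \<union> B) = msum m n g A + msum m n g B"
  by (rule eq_matI) (auto simp: msum_index sum.union_disjoint)

lemma msum_delta: "finite J \<Longrightarrow> a \<in> J \<Longrightarrow> X \<in> carrier_mat m n \<Longrightarrow>
  msum m n (\<lambda>j. if j = a then X else 0\<^sub>m m n) J = X"
proof (rule eq_matI)
  fix r c assume "finite J" "a \<in> J" "X \<in> carrier_mat m n" "r < dim_row X" "c < dim_col X"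
  then have "(\<Sum>j\<in>J. (if j = a then X else 0\<^sub>m m n) $$ (r,c)) = (\<Sum>j\<in>J. if j = a then X $$ (r,c) else 0)"
    by (intro sum.cong refl) auto
  also have "\<dots> = X $$ (r,c)" using \<open>finite J\<close> \<open>a \<in> J\<close> by simp
  finally show "msum m n (\<lambda>j. if j = a then X else 0\<^sub>m m n) J $$ (r, c) = X $$ (r,c)"
    using \<open>r < dim_row X\<close> \<open>c < dim_col X\<close> \<open>X \<in> carrier_mat m n\<close> by (simp add: msum_index)
qed auto

context opctx
begin

lemma op_msum: assumes "finite J" "\<And>j. j \<in> J \<Longrightarrow> g j \<in> carrier_mat m n"
  shows "op f (msum m n g J) = msum m n (\<lambda>j. op f (g j)) J"
  using assms
proof (induction J rule: finite_induct)
  case empty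
  then show ?case by (simp add: msum_empty op_zero)
next
  case (insert j J)
  then show ?case
    by (simp add: msum_insert op_add op_carrier)
qed

lemma op_sum_poly: assumes "finite J" "A \<in> carrier_mat m n"
  shows "op (\<Sum>j\<in>J. f j) A = msum m n (\<lambda>j. op (f j) A) J"
  using assms(1)
proof (induction J rule: finite_induct)
  case empty
  then show ?case by (simp add: msum_empty op_0poly[OF assms(2)])
next
  case (insert j J)
  then show ?case
    by (simp add: msum_insert op_add_poly[OF assms(2)] op_carrier[OF assms(2)])
qed

end

locale nilctx =
  fixes lam mu :: "'a::field" and F G :: "'a mat" and m n :: nat
  assumes F: "F \<in> carrier_mat m m" and G: "G \<in> carrier_mat n n"
    and nilF: "\<exists>k. F ^\<^sub>m k = 0\<^sub>m m m" and nilG: "\<exists>k. G ^\<^sub>m k = 0\<^sub>m n n"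
begin

sublocale opctx "lam \<cdot>\<^sub>m 1\<^sub>m m + F" "mu \<cdot>\<^sub>m 1\<^sub>m n + G" m n
  by unfold_locales (use F G in auto)

definition X :: "'a poly poly" where "X = [:[:-lam,1:]:]"
definition Y :: "'a poly poly" where "Y = [:[:-mu:],1:]"

lemma op_X: assumes A: "A \<in> carrier_mat m n" shows "op X A = F * A"
proof -
  have e: "X = smult [:0,1:] 1 + smult [:-lam:] 1" by (simp add: one_pCons X_def)
  have "op X A = (lam \<cdot>\<^sub>m 1\<^sub>m m + F) * A + (-lam) \<cdot>\<^sub>m A"
    unfolding e by (simp only: op_add_poly[OF A] op_xshift[OF A] op_smult_const[OF A] op_one[OF A])
  also have "\<dots> = F * A"
    by (rule eq_matI) (use A F in \<open>auto simp: add_mult_distrib_mat[of _ m m] mult_smult_assoc_mat[of _ m m]\<close>)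
  finally show ?thesis .
qed

lemma op_Y: assumes A: "A \<in> carrier_mat m n" shows "op Y A = A * G"
proof -
  have e: "Y = smult [:-mu:] 1 + pCons 0 1" by (simp add: one_pCons Y_def)
  have "op Y A = (-mu) \<cdot>\<^sub>m A + A * (mu \<cdot>\<^sub>m 1\<^sub>m n + G)"
    unfolding e by (simp only: op_add_poly[OF A] op_yshift[OF A] op_smult_const[OF A] op_one[OF A])
  also have "A * (mu \<cdot>\<^sub>m 1\<^sub>m n + G) = A * (mu \<cdot>\<^sub>m 1\<^sub>m n) + A * G"
    by (rule mult_add_distrib_mat[OF A]) (use G in auto)
  also have "A * (mu \<cdot>\<^sub>m 1\<^sub>m n) = mu \<cdot>\<^sub>m A"
    using mult_smult_distrib[OF A one_carrier_mat, of mu] A by simp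
  also have "(-mu) \<cdot>\<^sub>m A + (mu \<cdot>\<^sub>m A + A * G) = A * G"
    by (rule eq_matI) (use A G in auto)
  finally show ?thesis .
qed

lemma op_Xpow: assumes A: "A \<in> carrier_mat m n" shows "op (X ^ k) A = F ^\<^sub>m k * A"
proof (induction k)
  case 0 then show ?case using A F op_one[OF A] by simp
next
  case (Suc k)
  have P: "F ^\<^sub>m k \<in> carrier_mat m m" using F by simp
  have "op (X ^ Suc k) A = op X (op (X ^ k) A)" by (simp add: op_mult_poly[OF A])
  also have "\<dots> = F * (F ^\<^sub>m k * A)" using Suc op_X P A by simp
  also have "\<dots> = (F * F ^\<^sub>m k) * A" by (rule assoc_mult_mat[symmetric, OF F P A])
  also have "F * F ^\<^sub>m k = F ^\<^sub>m Suc k" using pow_mat_commute[OF F, of k] by simp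
  finally show ?case .
qed

lemma op_Ypow: "A \<in> carrier_mat m n \<Longrightarrow> op (Y ^ k) A = A * G ^\<^sub>m k"
proof (induction k arbitrary: A)
  case 0 then show ?case using op_one[OF 0] G 0 by simp
next
  case (Suc k)
  have A: "A \<in> carrier_mat m n" by fact
  have P: "G ^\<^sub>m k \<in> carrier_mat n n" using G by simp
  have AG: "A * G \<in> carrier_mat m n" using A G by simp
  have "op (Y ^ Suc k) A = op (Y ^ k) (op Y A)" by (simp only: power_Suc2 op_mult_poly[OF A])
  also have "\<dots> = (A * G) * G ^\<^sub>m k" using op_Y[OF A] Suc.IH[OF AG] by simp
  also have "\<dots> = A * (G * G ^\<^sub>m k)" by (rule assoc_mult_mat[OF A G P])
  also have "G * G ^\<^sub>m k = G ^\<^sub>m Suc k" using pow_mat_commute[OF G, of k] by simp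
  finally show ?case .
qed

lemma pow_zero_ge: assumes "M \<in> carrier_mat r r" "M ^\<^sub>m k = 0\<^sub>m r r" "k \<le> i"
  shows "M ^\<^sub>m i = 0\<^sub>m r r"
proof -
  obtain d where i: "i = k + d" using assms(3) le_Suc_ex by blast
  have "M ^\<^sub>m (k + d) = 0\<^sub>m r r"
  proof (induction d)
    case 0 then show ?case using assms by simp
  next
    case (Suc d) then show ?case using assms(1) by simp
  qed
  then show ?thesis using i by simp
qed

lemma op_nil: "\<exists>K. \<forall>A\<in>carrier_mat m n. \<forall>a b. op ((X * a + Y * b) ^ K) A = 0\<^sub>m m n"
proof -
  obtain k1 where k1: "F ^\<^sub>m k1 = 0\<^sub>m m m" using nilF by blast
  obtain k2 where k2: "G ^\<^sub>m k2 = 0\<^sub>m n n" using nilG by blast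
  define K where "K = k1 + k2"
  have "op ((X * a + Y * b) ^ K) A = 0\<^sub>m m n" if A: "A \<in> carrier_mat m n" for a b A
  proof -
    define rest where "rest i = of_nat (K choose i) * a ^ i * b ^ (K - i)" for i
    have "(X * a + Y * b) ^ K = (\<Sum>i\<le>K. of_nat (K choose i) * (X * a) ^ i * (Y * b) ^ (K - i))"
      by (rule binomial_ring)
    also have "\<dots> = (\<Sum>i\<le>K. X ^ i * (rest i * Y ^ (K - i)))"
      by (rule sum.cong[OF refl]) (simp add: rest_def power_mult_distrib mult_ac)
    finally have e: "(X * a + Y * b) ^ K = (\<Sum>i\<le>K. X ^ i * (rest i * Y ^ (K - i)))" .
    have z: "op (X ^ i * (rest i * Y ^ (K - i))) A = 0\<^sub>m m n" if "i \<le> K" for i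
    proof -
      have "op (X ^ i * (rest i * Y ^ (K - i))) A = F ^\<^sub>m i * op (rest i) (A * G ^\<^sub>m (K - i))"
        using A G by (simp add: op_mult_poly op_Xpow op_Ypow op_carrier)
      also have "\<dots> = 0\<^sub>m m n"
      proof (cases "k1 \<le> i")
        case True
        then have "F ^\<^sub>m i = 0\<^sub>m m m" using pow_zero_ge[OF F k1] by simp
        then show ?thesis using A G op_carrier by simp
      next
        case False
        then have "k2 \<le> K - i" using K_def by simp
        then have "G ^\<^sub>m (K - i) = 0\<^sub>m n n" using pow_zero_ge[OF G k2] by simp
        then have "A * G ^\<^sub>m (K - i) = 0\<^sub>m m n" using A by simp
        then show ?thesis using F op_zero by simp
      qed
      finally show ?thesis .
    qed
    show ?thesis unfolding e op_sum_poly[OF finite_atMost A]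
      by (rule msum_zero) (use z in auto)
  qed
  then show ?thesis by blast
qed

lemma decomp: assumes "eval2 e lam mu = 0" shows "\<exists>a b. e = X * a + Y * b"
proof -
  have 1: "[:-[:mu:], 1:] * synthetic_div e [:mu:] + [:poly e [:mu:]:] = e"
    by (rule synthetic_div_correct')
  have "poly (poly e [:mu:]) lam = 0" using assms by (simp add: eval2_alt)
  then have "[:-lam,1:] dvd poly e [:mu:]" using poly_eq_0_iff_dvd by blast
  then obtain s where s: "poly e [:mu:] = [:-lam,1:] * s" by (rule dvdE)
  have "[:poly e [:mu:]:] = X * [:s:]" using s by (simp add: X_def)
  moreover have "[:-[:mu:], 1:] = Y" by (simp add: Y_def)
  ultimately have "e = Y * synthetic_div e [:mu:] + X * [:s:]" using 1 by simp
  then show ?thesis by (metis add.commute)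
qed

lemma op_inverse: assumes "eval2 D lam mu \<noteq> 0"
  shows "\<exists>h. \<forall>A\<in>carrier_mat m n. op h (op D A) = A \<and> op D (op h A) = A"
proof -
  define c0 where "c0 = eval2 D lam mu"
  have c0: "c0 \<noteq> 0" using assms c0_def by simp
  define e where "e = D - [:[:c0:]:]"
  have "eval2 e lam mu = 0" unfolding e_def c0_def by (simp add: eval2_alt)
  then obtain a b where ab: "e = X * a + Y * b" using decomp by blast
  define u where "u = smult [:- inverse c0:] e"
  have u: "u = X * smult [:- inverse c0:] a + Y * smult [:- inverse c0:] b"
    unfolding u_def ab by (simp add: smult_add_right mult_smult_right)
  have Du: "D = smult [:c0:] (1 - u)"
  proof -
    have "smult [:c0:] (1 - u) = smult [:c0:] 1 - smult ([:c0:] * [:- inverse c0:]) e"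
      unfolding u_def by (simp add: smult_diff_right)
    also have "[:c0:] * [:- inverse c0:] = [:-1:]" using c0 by simp
    also have "smult [:c0:] 1 - smult [:-1:] e = [:[:c0:]:] + e"
    proof -
      have "smult [:-1:] e = - e" by (rule poly_eqI) simp
      then show ?thesis by (simp add: one_pCons)
    qed
    also have "\<dots> = D" unfolding e_def by simp
    finally show ?thesis by simp
  qed
  obtain K where K: "\<And>A a b. A \<in> carrier_mat m n \<Longrightarrow> op ((X * a + Y * b) ^ K) A = 0\<^sub>m m n"
    using op_nil by blast
  define h where "h = smult [:inverse c0:] (\<Sum>i<K. u ^ i)"
  show ?thesis
  proof (intro exI[of _ h] ballI conjI)
    fix A :: "'a mat" assume A: "A \<in> carrier_mat m n"
    have "D * h = (1 - u) * (\<Sum>i<K. u ^ i)"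
    proof -
      have o: "[:1:] = (1::'a poly)" by (simp add: one_pCons)
      show ?thesis unfolding Du h_def using c0 by (simp add: mult_smult_left mult_smult_right smult_smult o)
    qed
    also have "\<dots> = 1 - u ^ K" by (rule one_diff_power_eq[symmetric])
    finally have Dh: "D * h = 1 - u ^ K" .
    have "op (D * h) A = A"
    proof -
      have "op (u ^ K) A = 0\<^sub>m m n" unfolding u by (rule K[OF A])
      moreover have "A - 0\<^sub>m m n = A" by (rule eq_matI) (use A in auto)
      ultimately show ?thesis unfolding Dh using A by (simp add: op_sub_poly op_one)
    qed
    then show "op D (op h A) = A" using op_mult_poly[OF A] by simp
    then show "op h (op D A) = A" using op_commute[OF A] by simp
  qed
qed

end

definition minor :: "(nat \<Rightarrow> nat \<Rightarrow> 'a::comm_ring_1 poly poly) \<Rightarrow> nat \<Rightarrow> nat list \<Rightarrow> 'a poly poly mat" where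
  "minor fs w cs = mat w w (\<lambda>(a,b). fs (a+1) (cs!b))"

definition idx :: "'b list \<Rightarrow> 'b \<Rightarrow> nat" where
  "idx cs j = (THE b. b < length cs \<and> cs ! b = j)"

lemma idx_nth: "distinct cs \<Longrightarrow> b < length cs \<Longrightarrow> idx cs (cs ! b) = b"
  unfolding idx_def by (rule the_equality) (auto simp: nth_eq_iff_index_eq)

lemma nth_idx: "distinct cs \<Longrightarrow> j \<in> set cs \<Longrightarrow> idx cs j < length cs \<and> cs ! idx cs j = j"
  by (metis idx_nth in_set_conv_nth)

lemma set_nth_image: "set cs = (\<lambda>b. cs ! b) ` {..<length cs}"
  by (auto simp: in_set_conv_nth)

context opctx
begin

lemma op_compose:
  fixes r k :: nat
  assumes W: "\<And>a'. a' < r \<Longrightarrow> W a' \<in> carrier_mat m n"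
  shows "msum m n (\<lambda>b. op (P b) (msum m n (\<lambda>a'. op (Q b a') (W a')) {..<r})) {..<k}
       = msum m n (\<lambda>a'. op (\<Sum>b<k. P b * Q b a') (W a')) {..<r}"
proof -
  have "msum m n (\<lambda>b. op (P b) (msum m n (\<lambda>a'. op (Q b a') (W a')) {..<r})) {..<k}
      = msum m n (\<lambda>b. msum m n (\<lambda>a'. op (P b * Q b a') (W a')) {..<r}) {..<k}"
  proof (rule msum_cong)
    fix b assume "b \<in> {..<k}"
    have "op (P b) (msum m n (\<lambda>a'. op (Q b a') (W a')) {..<r})
        = msum m n (\<lambda>a'. op (P b) (op (Q b a') (W a'))) {..<r}"
      by (rule op_msum) (use W op_carrier in auto)
    also have "\<dots> = msum m n (\<lambda>a'. op (P b * Q b a') (W a')) {..<r}"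
      by (rule msum_cong) (use W op_mult_poly in auto)
    finally show "op (P b) (msum m n (\<lambda>a'. op (Q b a') (W a')) {..<r})
        = msum m n (\<lambda>a'. op (P b * Q b a') (W a')) {..<r}" .
  qed
  also have "\<dots> = msum m n (\<lambda>a'. msum m n (\<lambda>b. op (P b * Q b a') (W a')) {..<k}) {..<r}"
    by (rule msum_swap)
  also have "\<dots> = msum m n (\<lambda>a'. op (\<Sum>b<k. P b * Q b a') (W a')) {..<r}"
    by (rule msum_cong) (use W in \<open>simp add: op_sum_poly\<close>)
  finally show ?thesis .
qed

lemma op_delta:
  fixes r :: nat
  assumes W: "\<And>a'. a' < r \<Longrightarrow> W a' \<in> carrier_mat m n" and a: "a < r"
  shows "msum m n (\<lambda>a'. op (if a = a' then D else 0) (W a')) {..<r} = op D (W a)"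
proof -
  have "msum m n (\<lambda>a'. op (if a = a' then D else 0) (W a')) {..<r}
      = msum m n (\<lambda>a'. if a' = a then op D (W a) else 0\<^sub>m m n) {..<r}"
    by (rule msum_cong) (use W op_0poly in auto)
  also have "\<dots> = op D (W a)" by (rule msum_delta) (use a W op_carrier in auto)
  finally show ?thesis .
qed

end

lemma mult_entry_sum:
  assumes "P \<in> carrier_mat a k" "Q \<in> carrier_mat k c" "i < a" "j < c"
  shows "(\<Sum>b<k. P $$ (i,b) * Q $$ (b,j)) = (P * Q) $$ (i,j)"
  using index_mult_sum[OF assms] by simp

locale sysctx = nilctx lam mu F G m n
  for lam mu :: "'a::field" and F G m n +
  fixes fs :: "nat \<Rightarrow> nat \<Rightarrow> 'a poly poly" and t w :: nat and cs :: "nat list"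
  assumes cs: "distinct cs" "set cs \<subseteq> {1..t}" "length cs = w"
begin

abbreviation B where "B \<equiv> minor fs w cs"
abbreviation Del where "Del \<equiv> det B"
abbreviation adj where "adj \<equiv> adj_mat B"

abbreviation lhs :: "nat \<Rightarrow> (nat \<Rightarrow> 'a mat) \<Rightarrow> 'a mat" where
  "lhs i Z \<equiv> msum m n (\<lambda>j. op (fs i j) (Z j)) {1..t}"

abbreviation res :: "nat \<Rightarrow> (nat \<Rightarrow> 'a mat) \<Rightarrow> 'a mat" where
  "res i Z \<equiv> msum m n (\<lambda>j. op (fs i j) (Z j)) ({1..t} - set cs)"

lemma sys_lhs_eq: "sys_lhs fs t i lam mu m n F G Z = lhs i Z"
  unfolding sys_lhs_def msum_def by simp

lemma B_carrier: "B \<in> carrier_mat w w" unfolding minor_def by simp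
lemma B_index: "a < w \<Longrightarrow> b < w \<Longrightarrow> B $$ (a,b) = fs (a+1) (cs!b)"
  unfolding minor_def by simp

lemma adj_props: "adj \<in> carrier_mat w w" "B * adj = Del \<cdot>\<^sub>m 1\<^sub>m w" "adj * B = Del \<cdot>\<^sub>m 1\<^sub>m w"
  using adj_mat[OF B_carrier] by auto

lemma split_lhs: assumes Z: "\<And>j. j \<in> {1..t} \<Longrightarrow> Z j \<in> carrier_mat m n"
    and that: "1 \<le> i" "i \<le> w"
  shows "lhs i Z = msum m n (\<lambda>b. op (B $$ (i - 1, b)) (Z (cs ! b))) {..<w} + res i Z"
proof -
  have un: "{1..t} = set cs \<union> ({1..t} - set cs)" using cs by auto
  have "lhs i Z = msum m n (\<lambda>j. op (fs i j) (Z j)) (set cs) + res i Z"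
    by (subst un, rule msum_union) (use Z op_carrier cs in auto)
  also have "msum m n (\<lambda>j. op (fs i j) (Z j)) (set cs) = msum m n (\<lambda>b. op (fs i (cs!b)) (Z (cs!b))) {..<w}"
  proof -
    have "inj_on ((!) cs) {..<length cs}" by (rule inj_on_nth) (use cs in auto)
    then show ?thesis by (subst set_nth_image, subst msum_reindex) (use cs in auto)
  qed
  also have "\<dots> = msum m n (\<lambda>b. op (B $$ (i - 1, b)) (Z (cs ! b))) {..<w}"
    by (rule msum_cong) (use that in \<open>simp add: B_index\<close>)
  finally show ?thesis .
qed

end

lemma mat_diff_add_cancel: fixes A :: "'a::comm_ring_1 mat" shows "A \<in> carrier_mat m n \<Longrightarrow> C \<in> carrier_mat m n \<Longrightarrow> (A - C) + C = A"
  by (rule eq_matI) auto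

lemma mat_eq_add_imp_diff: fixes A :: "'a::comm_ring_1 mat" shows "A \<in> carrier_mat m n \<Longrightarrow> B \<in> carrier_mat m n \<Longrightarrow> C \<in> carrier_mat m n \<Longrightarrow>
  A = B + C \<Longrightarrow> B = A - C"
  by (rule eq_matI) auto

context sysctx
begin

lemma adjB_entry: "b < w \<Longrightarrow> b' < w \<Longrightarrow> (\<Sum>a<w. adj $$ (b,a) * B $$ (a,b')) = (if b = b' then Del else 0)"
  using mult_entry_sum[OF adj_props(1) B_carrier, of b b'] adj_props(3) by simp

lemma Badj_entry: "a < w \<Longrightarrow> a' < w \<Longrightarrow> (\<Sum>b<w. B $$ (a,b) * adj $$ (b,a')) = (if a = a' then Del else 0)"
  using mult_entry_sum[OF B_carrier adj_props(1), of a a'] adj_props(2) by simp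

lemma cramer1:
  assumes W: "\<And>b'. b' < w \<Longrightarrow> W b' \<in> carrier_mat m n" and b: "b < w"
  shows "msum m n (\<lambda>a. op (adj $$ (b,a)) (msum m n (\<lambda>b'. op (B $$ (a,b')) (W b')) {..<w})) {..<w} = op Del (W b)"
proof -
  have "msum m n (\<lambda>a. op (adj $$ (b,a)) (msum m n (\<lambda>b'. op (B $$ (a,b')) (W b')) {..<w})) {..<w}
      = msum m n (\<lambda>b'. op (\<Sum>a<w. adj $$ (b,a) * B $$ (a,b')) (W b')) {..<w}"
    by (rule op_compose[OF W])
  also have "\<dots> = msum m n (\<lambda>b'. op (if b = b' then Del else 0) (W b')) {..<w}"
    by (rule msum_cong) (use b adjB_entry in simp)
  also have "\<dots> = op Del (W b)" by (rule op_delta[OF W b])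
  finally show ?thesis .
qed

lemma cramer2:
  assumes Q: "\<And>a'. a' < w \<Longrightarrow> Q a' \<in> carrier_mat m n" and a: "a < w"
  shows "msum m n (\<lambda>b. op (B $$ (a,b)) (msum m n (\<lambda>a'. op (adj $$ (b,a')) (Q a')) {..<w})) {..<w} = op Del (Q a)"
proof -
  have "msum m n (\<lambda>b. op (B $$ (a,b)) (msum m n (\<lambda>a'. op (adj $$ (b,a')) (Q a')) {..<w})) {..<w}
      = msum m n (\<lambda>a'. op (\<Sum>b<w. B $$ (a,b) * adj $$ (b,a')) (Q a')) {..<w}"
    by (rule op_compose[OF Q])
  also have "\<dots> = msum m n (\<lambda>a'. op (if a = a' then Del else 0) (Q a')) {..<w}"
    by (rule msum_cong) (use a Badj_entry in simp)
  also have "\<dots> = op Del (Q a)" by (rule op_delta[OF Q a])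
  finally show ?thesis .
qed

lemma res_carrier: "(\<And>j. j \<in> {1..t} \<Longrightarrow> Z j \<in> carrier_mat m n) \<Longrightarrow> res i Z \<in> carrier_mat m n"
  by simp

lemma exists_sol:
  assumes inv: "eval2 Del lam mu \<noteq> 0"
    and N: "\<And>a. a \<in> {1..w} \<Longrightarrow> N a \<in> carrier_mat m n"
    and U: "\<And>j. U j \<in> carrier_mat m n"
  shows "\<exists>Z. is_solution fs t w lam mu m n F G N Z \<and> (\<forall>j\<in>{1..t} - set cs. Z j = U j)"
proof -
  obtain h where h: "\<And>A. A \<in> carrier_mat m n \<Longrightarrow> op h (op Del A) = A \<and> op Del (op h A) = A"
    using op_inverse[OF inv] by blast
  define N' where "N' a = N (a+1) - res (a+1) U" for a
  define M where "M b = msum m n (\<lambda>a. op (adj $$ (b,a)) (N' a)) {..<w}" for b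
  define V where "V b = op h (M b)" for b
  define Z where "Z j = (if j \<in> set cs then V (idx cs j) else U j)" for j
  have N'c: "N' a \<in> carrier_mat m n" if "a < w" for a
    unfolding N'_def using N[of "a+1"] that by (intro minus_carrier_mat) auto
  have Mc: "M b \<in> carrier_mat m n" for b unfolding M_def by simp
  have Vc: "V b \<in> carrier_mat m n" for b unfolding V_def using op_carrier[OF Mc] by simp
  have Zc: "Z j \<in> carrier_mat m n" for j unfolding Z_def using Vc U by simp
  have Zcs: "Z (cs ! b) = V b" if "b < w" for b
    unfolding Z_def using that cs idx_nth[OF cs(1), of b] by auto
  have res_eq: "res i Z = res i U" for i
    by (rule msum_cong) (simp add: Z_def)
  have "sys_lhs fs t i lam mu m n F G Z = N i" if i: "i \<in> {1..w}" for i
  proof -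
    have ia: "i - 1 < w" using i by auto
    have "sys_lhs fs t i lam mu m n F G Z = msum m n (\<lambda>b. op (B $$ (i - 1, b)) (Z (cs ! b))) {..<w} + res i Z"
      unfolding sys_lhs_eq by (rule split_lhs) (use Zc i in auto)
    also have "msum m n (\<lambda>b. op (B $$ (i - 1, b)) (Z (cs ! b))) {..<w}
        = msum m n (\<lambda>b. op h (op (B $$ (i - 1, b)) (M b))) {..<w}"
      by (rule msum_cong) (simp add: Zcs V_def op_commute[OF Mc])
    also have "\<dots> = op h (msum m n (\<lambda>b. op (B $$ (i - 1, b)) (M b)) {..<w})"
      by (rule op_msum[symmetric]) (use Mc op_carrier in auto)
    also have "msum m n (\<lambda>b. op (B $$ (i - 1, b)) (M b)) {..<w} = op Del (N' (i - 1))"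
      unfolding M_def by (rule cramer2[OF N'c ia])
    also have "op h (op Del (N' (i - 1))) = N' (i - 1)" using h N'c[OF ia] by blast
    also have "N' (i - 1) = N i - res i U" unfolding N'_def using i by simp
    also have "res i Z = res i U" by (rule res_eq)
    also have "N i - res i U + res i U = N i"
      by (rule mat_diff_add_cancel[OF N[OF i]]) simp
    finally show ?thesis .
  qed
  then have "is_solution fs t w lam mu m n F G N Z"
    unfolding is_solution_def using Zc by blast
  moreover have "\<forall>j\<in>{1..t} - set cs. Z j = U j" by (simp add: Z_def)
  ultimately show ?thesis by blast
qed

lemma sol_formula:
  assumes sol: "is_solution fs t w lam mu m n F G N Z" and b: "b < w"
  shows "op Del (Z (cs ! b)) = msum m n (\<lambda>a. op (adj $$ (b,a)) (N (a+1) - res (a+1) Z)) {..<w}"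
proof -
  have Zc: "\<And>j. j \<in> {1..t} \<Longrightarrow> Z j \<in> carrier_mat m n" using sol unfolding is_solution_def by blast
  have eqs: "\<And>i. i \<in> {1..w} \<Longrightarrow> lhs i Z = N i" using sol unfolding is_solution_def sys_lhs_eq by blast
  have Wc: "Z (cs ! b') \<in> carrier_mat m n" if "b' < w" for b'
    using Zc cs that nth_mem by blast
  have "op Del (Z (cs ! b)) = msum m n (\<lambda>a. op (adj $$ (b,a)) (msum m n (\<lambda>b'. op (B $$ (a,b')) (Z (cs ! b'))) {..<w})) {..<w}"
    by (rule cramer1[symmetric, OF Wc b])
  also have "\<dots> = msum m n (\<lambda>a. op (adj $$ (b,a)) (N (a+1) - res (a+1) Z)) {..<w}"
  proof (rule msum_cong)
    fix a assume a: "a \<in> {..<w}"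
    have "lhs (a+1) Z = msum m n (\<lambda>b'. op (B $$ (a, b')) (Z (cs ! b'))) {..<w} + res (a+1) Z"
      using split_lhs[OF Zc, where i="a+1"] a by simp
    then have "msum m n (\<lambda>b'. op (B $$ (a, b')) (Z (cs ! b'))) {..<w} = lhs (a+1) Z - res (a+1) Z"
      by (rule mat_eq_add_imp_diff[rotated 3]) (use Zc in auto)
    also have "lhs (a+1) Z = N (a+1)" using eqs a by simp
    finally show "op (adj $$ (b,a)) (msum m n (\<lambda>b'. op (B $$ (a, b')) (Z (cs ! b'))) {..<w})
        = op (adj $$ (b,a)) (N (a+1) - res (a+1) Z)" by simp
  qed
  finally show ?thesis .
qed

lemma unique_sol:
  assumes inv: "eval2 Del lam mu \<noteq> 0"
    and s1: "is_solution fs t w lam mu m n F G N Z1" and s2: "is_solution fs t w lam mu m n F G N Z2"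
    and agree: "\<forall>j\<in>{1..t} - set cs. Z1 j = Z2 j"
  shows "\<forall>j\<in>{1..t}. Z1 j = Z2 j"
proof
  fix j assume j: "j \<in> {1..t}"
  show "Z1 j = Z2 j"
  proof (cases "j \<in> set cs")
    case False then show ?thesis using agree j by blast
  next
    case True
    obtain h where h: "\<And>A. A \<in> carrier_mat m n \<Longrightarrow> op h (op Del A) = A \<and> op Del (op h A) = A"
      using op_inverse[OF inv] by blast
    define b where "b = idx cs j"
    have b: "b < w" "cs ! b = j" using nth_idx[OF cs(1) True] cs(3) b_def by auto
    have rr: "res i Z1 = res i Z2" for i by (rule msum_cong) (use agree in auto)
    have "op Del (Z1 j) = op Del (Z2 j)"
      using sol_formula[OF s1 b(1)] sol_formula[OF s2 b(1)] b(2) rr by simp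
    moreover have "Z1 j \<in> carrier_mat m n" "Z2 j \<in> carrier_mat m n"
      using s1 s2 j unfolding is_solution_def by auto
    ultimately show ?thesis using h by metis
  qed
qed

end

context opctx
begin

lemma op_compose2:
  fixes k :: nat
  assumes J: "finite J" and W: "\<And>j. j \<in> J \<Longrightarrow> W j \<in> carrier_mat m n"
  shows "msum m n (\<lambda>b. op (P b) (msum m n (\<lambda>j. op (Q b j) (W j)) J)) {..<k}
       = msum m n (\<lambda>j. op (\<Sum>b<k. P b * Q b j) (W j)) J"
proof -
  have "msum m n (\<lambda>b. op (P b) (msum m n (\<lambda>j. op (Q b j) (W j)) J)) {..<k}
      = msum m n (\<lambda>b. msum m n (\<lambda>j. op (P b * Q b j) (W j)) J) {..<k}"
  proof (rule msum_cong)
    fix b assume "b \<in> {..<k}"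
    have "op (P b) (msum m n (\<lambda>j. op (Q b j) (W j)) J)
        = msum m n (\<lambda>j. op (P b) (op (Q b j) (W j))) J"
      by (rule op_msum[OF J]) (use W op_carrier in auto)
    also have "\<dots> = msum m n (\<lambda>j. op (P b * Q b j) (W j)) J"
      by (rule msum_cong) (use W op_mult_poly in auto)
    finally show "op (P b) (msum m n (\<lambda>j. op (Q b j) (W j)) J)
        = msum m n (\<lambda>j. op (P b * Q b j) (W j)) J" .
  qed
  also have "\<dots> = msum m n (\<lambda>j. msum m n (\<lambda>b. op (P b * Q b j) (W j)) {..<k}) J"
    by (rule msum_swap)
  also have "\<dots> = msum m n (\<lambda>j. op (\<Sum>b<k. P b * Q b j) (W j)) J"
    by (rule msum_cong) (use W in \<open>simp add: op_sum_poly\<close>)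
  finally show ?thesis .
qed

end

context sysctx
begin

definition E :: "nat \<Rightarrow> 'a poly poly mat" where "E j = minor fs (w+1) (cs @ [j])"
definition z :: "nat \<Rightarrow> 'a poly poly" where "z a = cofactor (E 0) a w"

lemma E_carrier: "E j \<in> carrier_mat (Suc w) (Suc w)" unfolding E_def minor_def by simp

lemma E_last: "a < Suc w \<Longrightarrow> E j $$ (a, w) = fs (a+1) j"
proof -
  assume "a < Suc w"
  moreover have "(cs @ [j]) ! w = j" using cs(3) by (simp add: nth_append)
  ultimately show ?thesis unfolding E_def minor_def by simp
qed

lemma E_delete: "mat_delete (E j1) a w = mat_delete (E j2) a w"
proof (rule eq_matI)
  fix i' j' assume "i' < dim_row (mat_delete (E j2) a w)" "j' < dim_col (mat_delete (E j2) a w)"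
  then have ij: "i' < w" "j' < w" using E_carrier[of j2] by auto
  show "mat_delete (E j1) a w $$ (i', j') = mat_delete (E j2) a w $$ (i', j')"
    unfolding mat_delete_def E_def minor_def using ij cs(3) by (auto simp: nth_append)
qed (simp_all add: E_def minor_def)

lemma cof_E: "cofactor (E j) a w = z a"
  unfolding z_def cofactor_def using E_delete[of j a 0] by simp

lemma z_w: "z w = Del"
proof -
  have "mat_delete (E 0) w w = B"
  proof (rule eq_matI)
    fix i' j' assume "i' < dim_row B" "j' < dim_col B"
    then have ij: "i' < w" "j' < w" unfolding minor_def by auto
    show "mat_delete (E 0) w w $$ (i', j') = B $$ (i', j')"
      unfolding mat_delete_def E_def minor_def using ij cs(3) by (auto simp: nth_append)
  qed (simp_all add: E_def minor_def)
  then show ?thesis unfolding z_def cofactor_def by simp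
qed

lemma det_E: "det (E j) = (\<Sum>a<Suc w. z a * fs (a+1) j)"
  using laplace_expansion_column[OF E_carrier, of w j] by (simp add: E_last cof_E mult.commute)

lemma part_ii:
  assumes inv: "eval2 Del lam mu \<noteq> 0"
    and dq: "\<And>j. j \<in> {1..t} \<Longrightarrow> det (E j) = d * q j"
    and sol: "is_solution fs t w lam mu m n F G (\<lambda>_. 0\<^sub>m m n) Z"
  shows "\<exists>S\<in>carrier_mat m n. sys_lhs fs t (w + 1) lam mu m n F G Z = op d S"
proof -
  obtain h where h: "\<And>A. A \<in> carrier_mat m n \<Longrightarrow> op h (op Del A) = A \<and> op Del (op h A) = A"
    using op_inverse[OF inv] by blast
  have Zc: "\<And>j. j \<in> {1..t} \<Longrightarrow> Z j \<in> carrier_mat m n" using sol unfolding is_solution_def by blast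
  have eqs: "\<And>i. i \<in> {1..w} \<Longrightarrow> lhs i Z = 0\<^sub>m m n" using sol unfolding is_solution_def sys_lhs_eq by blast
  have "msum m n (\<lambda>a. op (z a) (lhs (a+1) Z)) {..<Suc w}
      = op (z w) (lhs (w+1) Z) + msum m n (\<lambda>a. op (z a) (lhs (a+1) Z)) {..<w}"
    unfolding lessThan_Suc by (rule msum_insert) (auto simp: op_carrier)
  also have "msum m n (\<lambda>a. op (z a) (lhs (a+1) Z)) {..<w} = 0\<^sub>m m n"
  proof (rule msum_zero)
    fix a assume "a \<in> {..<w}"
    then have "lhs (a+1) Z = 0\<^sub>m m n" using eqs by simp
    then show "op (z a) (lhs (a+1) Z) = 0\<^sub>m m n" by (simp add: op_zero)
  qed
  also have "op (z w) (lhs (w+1) Z) + 0\<^sub>m m n = op Del (lhs (w+1) Z)"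
    using z_w op_carrier by simp
  finally have 1: "msum m n (\<lambda>a. op (z a) (lhs (a+1) Z)) {..<Suc w} = op Del (lhs (w+1) Z)" .
  have "msum m n (\<lambda>a. op (z a) (lhs (a+1) Z)) {..<Suc w}
      = msum m n (\<lambda>j. op (\<Sum>a<Suc w. z a * fs (a+1) j) (Z j)) {1..t}"
    by (rule op_compose2) (use Zc in auto)
  also have "\<dots> = msum m n (\<lambda>j. op d (op (q j) (Z j))) {1..t}"
  proof (rule msum_cong)
    fix j assume j: "j \<in> {1..t}"
    have "(\<Sum>a<Suc w. z a * fs (a+1) j) = d * q j" using det_E[of j] dq[OF j] by simp
    then show "op (\<Sum>a<Suc w. z a * fs (a+1) j) (Z j) = op d (op (q j) (Z j))"
      using op_mult_poly[OF Zc[OF j]] by simp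
  qed
  also have "\<dots> = op d (msum m n (\<lambda>j. op (q j) (Z j)) {1..t})"
    by (rule op_msum[symmetric]) (use Zc op_carrier in auto)
  finally have 2: "op Del (lhs (w+1) Z) = op d (msum m n (\<lambda>j. op (q j) (Z j)) {1..t})" using 1 by simp
  define Y0 where "Y0 = msum m n (\<lambda>j. op (q j) (Z j)) {1..t}"
  have Y0: "Y0 \<in> carrier_mat m n" unfolding Y0_def by simp
  have "lhs (w+1) Z = op h (op Del (lhs (w+1) Z))" using h[of "lhs (w+1) Z"] by simp
  also have "\<dots> = op h (op d Y0)" using 2 Y0_def by simp
  also have "\<dots> = op d (op h Y0)" by (rule op_commute[OF Y0])
  finally show ?thesis unfolding sys_lhs_eq using op_carrier[OF Y0] by blast
qed

end

lemma last_true: "Q (0::nat) \<Longrightarrow> \<not> Q p \<Longrightarrow> \<exists>w<p. Q w \<and> \<not> Q (Suc w)"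
proof (induction p)
  case 0 then show ?case by simp
next
  case (Suc p)
  show ?case
  proof (cases "Q p")
    case True then show ?thesis using Suc.prems by blast
  next
    case False then show ?thesis using Suc by (meson less_Suc_eq)
  qed
qed

lemma det_minor0: "det (minor fs 0 []) = 1"
proof -
  have "minor fs 0 [] = 1\<^sub>m 0" by (rule eq_matI) (auto simp: minor_def)
  then show ?thesis by simp
qed

lemma minor_distinct:
  assumes "length cs = w" "det (minor fs w cs) \<noteq> 0"
  shows "distinct cs"
proof (rule ccontr)
  assume "\<not> distinct cs"
  then obtain i j where ij: "i < w" "j < w" "i \<noteq> j" "cs ! i = cs ! j"
    using assms(1) distinct_conv_nth by metis
  have "det (minor fs w cs) = 0"
  proof (rule det_identical_columns[OF _ ij(3) ij(1) ij(2)])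
    show "minor fs w cs \<in> carrier_mat w w" by (simp add: minor_def)
    show "col (minor fs w cs) i = col (minor fs w cs) j"
      by (rule eq_vecI) (use ij in \<open>auto simp: minor_def\<close>)
  qed
  with assms(2) show False by simp
qed

lemma adm_sysctx:
  assumes "admissible m n F G" "distinct cs" "set cs \<subseteq> {1..t}" "length cs = w"
  shows "sysctx F G m n t w cs"
proof -
  have F: "F \<in> carrier_mat m m" and G: "G \<in> carrier_mat n n"
    and nF: "nilpotent_mat F" and nG: "nilpotent_mat G"
    using assms(1) unfolding admissible_def by auto
  show ?thesis unfolding sysctx_def nilctx_def sysctx_axioms_def
    using F G nF nG assms(2-4) by (auto simp: nilpotent_mat_def)
qed


theorem lemma3p2:
  fixes fs :: "nat \<Rightarrow> nat \<Rightarrow> 'a::alg_closed_field poly poly"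
    and p t :: nat
    and D :: "('a \<times> 'a) set"
  assumes "infinite D"
    and "\<forall>(lam, mu)\<in>D. \<exists>m n F G N. admissible m n F G \<and>
           (\<forall>i\<in>{1..p}. N i \<in> carrier_mat m n) \<and>
           \<not> solvable fs t p lam mu m n F G N"
  shows "\<exists>D' d w js. D' \<subseteq> D \<and> infinite D' \<and>
     (\<forall>(lam, mu)\<in>D'. eval2 d lam mu = 0) \<and>
     w \<le> min (p - 1) t \<and>
     js ` {1..t - w} \<subseteq> {1..t} \<and> inj_on js {1..t - w} \<and>
     (\<forall>(lam, mu)\<in>D'. \<forall>m n F G N.
        admissible m n F G \<and> (\<forall>i\<in>{1..w}. N i \<in> carrier_mat m n) \<longrightarrow>
          solvable fs t w lam mu m n F G N \<and>
          (\<forall>S. (\<forall>a\<in>{1..t - w}. S a \<in> carrier_mat m n) \<longrightarrow>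
             (\<exists>X. is_solution fs t w lam mu m n F G N X \<and> (\<forall>a\<in>{1..t - w}. X (js a) = S a)) \<and>
             (\<forall>X Y. is_solution fs t w lam mu m n F G N X \<and> (\<forall>a\<in>{1..t - w}. X (js a) = S a) \<and>
                    is_solution fs t w lam mu m n F G N Y \<and> (\<forall>a\<in>{1..t - w}. Y (js a) = S a)
                    \<longrightarrow> (\<forall>j\<in>{1..t}. X j = Y j)))) \<and>
     (\<forall>(lam, mu)\<in>D'. \<forall>m n F G X.
        admissible m n F G \<and> is_solution fs t w lam mu m n F G (\<lambda>_. 0\<^sub>m m n) X \<longrightarrow>
          (\<exists>S\<in>carrier_mat m n.
             sys_lhs fs t (w + 1) lam mu m n F G X =
             polyapp (lam \<cdot>\<^sub>m 1\<^sub>m m + F) (mu \<cdot>\<^sub>m 1\<^sub>m n + G) d S))"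
proof -
  define good where "good = (\<lambda>lam mu w. \<exists>cs. length cs = w \<and> set cs \<subseteq> {1..t} \<and>
      eval2 (det (minor fs w cs)) lam mu \<noteq> 0)"
  have good0: "good lam mu 0" for lam mu
    unfolding good_def by (intro exI[of _ "[]"]) (simp add: det_minor0 eval2_1)
  have goodp: "\<not> good lam mu p" if PD: "(lam, mu) \<in> D" for lam mu
  proof
    assume "good lam mu p"
    then obtain cs where cs: "length cs = p" "set cs \<subseteq> {1..t}" "eval2 (det (minor fs p cs)) lam mu \<noteq> 0"
      unfolding good_def by blast
    obtain m n F G N where adm: "admissible m n F G" and Nc: "\<forall>i\<in>{1..p}. N i \<in> carrier_mat m n"
      and ns: "\<not> solvable fs t p lam mu m n F G N"
      using assms(2) PD by blast
    have "det (minor fs p cs) \<noteq> 0" using cs(3) eval2_0 by metis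
    then have dist: "distinct cs" by (rule minor_distinct[OF cs(1)])
    interpret S: sysctx lam mu F G m n fs t p cs
      by (rule adm_sysctx[OF adm dist cs(2) cs(1)])
    have "\<exists>Z. is_solution fs t p lam mu m n F G N Z \<and> (\<forall>j\<in>{1..t} - set cs. Z j = 0\<^sub>m m n)"
      by (rule S.exists_sol[OF cs(3)]) (use Nc in auto)
    then have "solvable fs t p lam mu m n F G N" unfolding solvable_def by blast
    with ns show False by contradiction
  qed
  define propc where "propc = (\<lambda>(P :: 'a \<times> 'a) (c :: nat \<times> nat list). case c of (w, cs) \<Rightarrow>
     w < p \<and> length cs = w \<and> set cs \<subseteq> {1..t} \<and> eval2 (det (minor fs w cs)) (fst P) (snd P) \<noteq> 0
     \<and> \<not> good (fst P) (snd P) (Suc w))"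
  have exprop: "\<exists>c. propc P c" if PD: "P \<in> D" for P
  proof -
    obtain lam mu where P: "P = (lam, mu)" by (cases P)
    have "(lam, mu) \<in> D" using PD P by simp
    then have "\<exists>w<p. good lam mu w \<and> \<not> good lam mu (Suc w)"
      by (rule last_true[OF good0 goodp])
    then obtain w where w: "w < p" "good lam mu w" "\<not> good lam mu (Suc w)" by blast
    then obtain cs where "length cs = w \<and> set cs \<subseteq> {1..t} \<and> eval2 (det (minor fs w cs)) lam mu \<noteq> 0"
      unfolding good_def by blast
    then have "propc P (w, cs)" unfolding propc_def P using w by simp
    then show ?thesis by blast
  qed
  define ch where "ch P = (SOME c. propc P c)" for P
  have chp: "propc P (ch P)" if "P \<in> D" for P
    unfolding ch_def using exprop[OF that] by (rule someI_ex)
  define Cands where "Cands = {(w, cs). w < p \<and> length cs = w \<and> set cs \<subseteq> {1..t}}"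
  have finC: "finite Cands"
  proof (rule finite_subset)
    show "Cands \<subseteq> {..<p} \<times> {cs. set cs \<subseteq> {1..t} \<and> length cs \<le> p}"
      unfolding Cands_def by auto
    show "finite ({..<p} \<times> {cs. set cs \<subseteq> {1..t} \<and> length cs \<le> p})"
      by (intro finite_cartesian_product finite_lists_length_le) auto
  qed
  have Dsub: "D \<subseteq> (\<Union>c\<in>Cands. {P\<in>D. ch P = c})"
  proof
    fix P assume P: "P \<in> D"
    obtain w cs where wc: "ch P = (w, cs)" by (cases "ch P")
    have "(w, cs) \<in> Cands" using chp[OF P] unfolding wc propc_def Cands_def by auto
    then show "P \<in> (\<Union>c\<in>Cands. {P\<in>D. ch P = c})" using P wc by blast
  qed
  obtain c where cC: "c \<in> Cands" and infc: "infinite {P\<in>D. ch P = c}"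
  proof -
    have "\<exists>c\<in>Cands. infinite {P\<in>D. ch P = c}"
    proof (rule ccontr)
      assume "\<not> (\<exists>c\<in>Cands. infinite {P\<in>D. ch P = c})"
      then have "finite (\<Union>c\<in>Cands. {P\<in>D. ch P = c})" using finC by blast
      then have "finite D" using Dsub finite_subset by blast
      with assms(1) show False by contradiction
    qed
    then show ?thesis using that by blast
  qed
  obtain w cs where c: "c = (w, cs)" by (cases c)
  define D1 where "D1 = {P\<in>D. ch P = (w, cs)}"
  have infD1: "infinite D1" using infc c D1_def by simp
  have D1D: "D1 \<subseteq> D" unfolding D1_def by auto
  have wcs: "w < p" "length cs = w" "set cs \<subseteq> {1..t}" using cC c unfolding Cands_def by auto
  have D1p: "eval2 (det (minor fs w cs)) lam mu \<noteq> 0 \<and> \<not> good lam mu (Suc w)" if "(lam, mu) \<in> D1" for lam mu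
  proof -
    have "(lam, mu) \<in> D" "ch (lam, mu) = (w, cs)" using that unfolding D1_def by auto
    then show ?thesis using chp[of "(lam, mu)"] unfolding propc_def by simp
  qed
  obtain P0 where P0: "P0 \<in> D1" using infD1 by (metis ex_in_conv finite.emptyI)
  obtain lam0 mu0 where P0': "P0 = (lam0, mu0)" by (cases P0)
  have "det (minor fs w cs) \<noteq> 0" using D1p[of lam0 mu0] P0 P0' eval2_0 by metis
  then have dist: "distinct cs" by (rule minor_distinct[OF wcs(2)])
  have wt: "w \<le> t"
  proof -
    have "w = card (set cs)" using distinct_card[OF dist] wcs(2) by simp
    also have "\<dots> \<le> card {1..t}" by (rule card_mono) (use wcs(3) in auto)
    finally show ?thesis by simp
  qed
  define g where "g j = det (minor fs (w+1) (cs @ [j]))" for j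
  have vanish: "\<forall>j\<in>{1..t}. \<forall>(x,y)\<in>D1. eval2 (g j) x y = 0"
  proof (intro ballI)
    fix j P assume j: "j \<in> {1..t}" and P: "P \<in> D1"
    obtain x y where Pxy: "P = (x, y)" by (cases P)
    have ng: "\<not> good x y (Suc w)" using D1p[of x y] P Pxy by simp
    have "length (cs @ [j]) = Suc w" "set (cs @ [j]) \<subseteq> {1..t}" using wcs j by auto
    then have "eval2 (g j) x y = 0" using ng unfolding good_def g_def by auto
    then show "case P of (x, y) \<Rightarrow> eval2 (g j) x y = 0" using Pxy by simp
  qed
  obtain d where ddvd: "\<forall>j\<in>{1..t}. d dvd g j" and infD': "infinite {(x,y)\<in>D1. eval2 d x y = 0}"
    using common_div[OF finite_atLeastAtMost infD1 vanish] by blast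
  define D' where "D' = {(x,y)\<in>D1. eval2 d x y = 0}"
  define rest where "rest = sorted_list_of_set ({1..t} - set cs)"
  define js where "js a = rest ! (a - 1)" for a
  have rest: "distinct rest" "set rest = {1..t} - set cs" "length rest = t - w"
  proof -
    show "distinct rest" "set rest = {1..t} - set cs" unfolding rest_def by auto
    have "length rest = card ({1..t} - set cs)" unfolding rest_def by simp
    also have "\<dots> = card {1..t} - card (set cs)" by (rule card_Diff_subset) (use wcs in auto)
    also have "\<dots> = t - w" using distinct_card[OF dist] wcs(2) by simp
    finally show "length rest = t - w" .
  qed
  have js_in: "js a \<in> set rest" if "a \<in> {1..t - w}" for a
    unfolding js_def using that rest(3) by auto
  have js_inj: "inj_on js {1..t - w}"
  proof (rule inj_onI)
    fix a b assume a: "a \<in> {1..t - w}" and b: "b \<in> {1..t - w}" and e: "js a = js b"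
    have "a - 1 < length rest" "b - 1 < length rest" using a b rest(3) by auto
    then have "a - 1 = b - 1" using e rest(1) unfolding js_def by (simp add: nth_eq_iff_index_eq)
    then show "a = b" using a b by auto
  qed
  define q where "q j = (SOME q. g j = d * q)" for j
  have dq: "g j = d * q j" if "j \<in> {1..t}" for j
  proof -
    have "d dvd g j" using ddvd that by blast
    then have "\<exists>q. g j = d * q" by (rule dvdE) blast
    then show ?thesis unfolding q_def by (rule someI_ex)
  qed
  have part_i: "solvable fs t w lam mu m n F G N \<and>
          (\<forall>S. (\<forall>a\<in>{1..t - w}. S a \<in> carrier_mat m n) \<longrightarrow>
             (\<exists>X. is_solution fs t w lam mu m n F G N X \<and> (\<forall>a\<in>{1..t - w}. X (js a) = S a)) \<and>
             (\<forall>X Y. is_solution fs t w lam mu m n F G N X \<and> (\<forall>a\<in>{1..t - w}. X (js a) = S a) \<and>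
                    is_solution fs t w lam mu m n F G N Y \<and> (\<forall>a\<in>{1..t - w}. Y (js a) = S a)
                    \<longrightarrow> (\<forall>j\<in>{1..t}. X j = Y j)))"
    if PD: "(lam, mu) \<in> D'" and adm: "admissible m n F G" and Nc: "\<forall>i\<in>{1..w}. N i \<in> carrier_mat m n"
    for lam mu m n F G N
  proof -
    have inv: "eval2 (det (minor fs w cs)) lam mu \<noteq> 0" using D1p[of lam mu] PD unfolding D'_def by auto
    interpret S: sysctx lam mu F G m n fs t w cs
      by (rule adm_sysctx[OF adm dist wcs(3) wcs(2)])
    have "\<exists>Z. is_solution fs t w lam mu m n F G N Z \<and> (\<forall>j\<in>{1..t} - set cs. Z j = 0\<^sub>m m n)"
      by (rule S.exists_sol[OF inv]) (use Nc in auto)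
    then have solv: "solvable fs t w lam mu m n F G N" unfolding solvable_def by blast
    have rest_part: "(\<exists>X. is_solution fs t w lam mu m n F G N X \<and> (\<forall>a\<in>{1..t - w}. X (js a) = Sx a)) \<and>
             (\<forall>X Y. is_solution fs t w lam mu m n F G N X \<and> (\<forall>a\<in>{1..t - w}. X (js a) = Sx a) \<and>
                    is_solution fs t w lam mu m n F G N Y \<and> (\<forall>a\<in>{1..t - w}. Y (js a) = Sx a)
                    \<longrightarrow> (\<forall>j\<in>{1..t}. X j = Y j))"
      if Sc: "\<forall>a\<in>{1..t - w}. Sx a \<in> carrier_mat m n" for Sx
    proof
      define U where "U j = (if j \<in> set rest then Sx (idx rest j + 1) else 0\<^sub>m m n)" for j
      have Uc: "U j \<in> carrier_mat m n" for j
      proof (cases "j \<in> set rest")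
        case True
        then have "idx rest j < t - w" using nth_idx[OF rest(1) True] rest(3) by simp
        then show ?thesis unfolding U_def using True Sc by auto
      qed (simp add: U_def)
      have "\<exists>Z. is_solution fs t w lam mu m n F G N Z \<and> (\<forall>j\<in>{1..t} - set cs. Z j = U j)"
        by (rule S.exists_sol[OF inv]) (use Nc Uc in auto)
      then obtain Z where Z: "is_solution fs t w lam mu m n F G N Z" "\<forall>j\<in>{1..t} - set cs. Z j = U j"
        by (elim exE conjE)
      have "Z (js a) = Sx a" if a: "a \<in> {1..t - w}" for a
      proof -
        have "js a \<in> {1..t} - set cs" using js_in[OF a] rest(2) by simp
        then have "Z (js a) = U (js a)" using Z(2) by blast
        also have "\<dots> = Sx (idx rest (rest ! (a - 1)) + 1)"
          unfolding U_def using js_in[OF a] by (simp add: js_def)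
        also have "idx rest (rest ! (a - 1)) = a - 1" by (rule idx_nth[OF rest(1)]) (use a rest(3) in auto)
        finally show ?thesis using a by simp
      qed
      then show "\<exists>X. is_solution fs t w lam mu m n F G N X \<and> (\<forall>a\<in>{1..t - w}. X (js a) = Sx a)"
        using Z(1) by blast
    next
      show "\<forall>X Y. is_solution fs t w lam mu m n F G N X \<and> (\<forall>a\<in>{1..t - w}. X (js a) = Sx a) \<and>
                    is_solution fs t w lam mu m n F G N Y \<and> (\<forall>a\<in>{1..t - w}. Y (js a) = Sx a)
                    \<longrightarrow> (\<forall>j\<in>{1..t}. X j = Y j)"
      proof (intro allI impI)
        fix X Y assume H: "is_solution fs t w lam mu m n F G N X \<and> (\<forall>a\<in>{1..t - w}. X (js a) = Sx a) \<and>
                    is_solution fs t w lam mu m n F G N Y \<and> (\<forall>a\<in>{1..t - w}. Y (js a) = Sx a)"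
        have agree: "\<forall>j\<in>{1..t} - set cs. X j = Y j"
        proof
          fix j assume "j \<in> {1..t} - set cs"
          then have jr: "j \<in> set rest" using rest(2) by simp
          define a where "a = idx rest j + 1"
          have a: "a \<in> {1..t - w}" "js a = j"
            using nth_idx[OF rest(1) jr] rest(3) unfolding a_def js_def by auto
          have "X (js a) = Sx a" "Y (js a) = Sx a" using H a(1) by auto
          then show "X j = Y j" using a(2) by simp
        qed
        show "\<forall>j\<in>{1..t}. X j = Y j"
          by (rule S.unique_sol[OF inv]) (use H agree in auto)
      qed
    qed
    show ?thesis
      apply (rule conjI[OF solv])
      apply (intro allI impI)
      apply (erule rest_part)
      done
  qed
  have part_ii: "\<exists>S\<in>carrier_mat m n.
             sys_lhs fs t (w + 1) lam mu m n F G X =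
             polyapp (lam \<cdot>\<^sub>m 1\<^sub>m m + F) (mu \<cdot>\<^sub>m 1\<^sub>m n + G) d S"
    if PD: "(lam, mu) \<in> D'" and adm: "admissible m n F G"
      and sol: "is_solution fs t w lam mu m n F G (\<lambda>_. 0\<^sub>m m n) X"
    for lam mu m n F G X
  proof -
    have inv: "eval2 (det (minor fs w cs)) lam mu \<noteq> 0" using D1p[of lam mu] PD unfolding D'_def by auto
    interpret S: sysctx lam mu F G m n fs t w cs
      by (rule adm_sysctx[OF adm dist wcs(3) wcs(2)])
    show ?thesis
    proof (rule S.part_ii[where q=q, OF inv _ sol])
      fix j assume j: "j \<in> {1..t}"
      show "det (S.E j) = d * q j" using dq[OF j] unfolding g_def S.E_def by simp
    qed
  qed
  show ?thesis
  proof (intro exI conjI)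
    show "D' \<subseteq> D" unfolding D'_def using D1D by auto
    show "infinite D'" unfolding D'_def by (rule infD')
    show "\<forall>(lam, mu)\<in>D'. eval2 d lam mu = 0" unfolding D'_def by auto
    show "w \<le> min (p - 1) t" using wcs(1) wt by simp
    show "js ` {1..t - w} \<subseteq> {1..t}" using js_in rest(2) by auto
    show "inj_on js {1..t - w}" by (rule js_inj)
    show "\<forall>(lam, mu)\<in>D'. \<forall>m n F G N.
        admissible m n F G \<and> (\<forall>i\<in>{1..w}. N i \<in> carrier_mat m n) \<longrightarrow>
          solvable fs t w lam mu m n F G N \<and>
          (\<forall>S. (\<forall>a\<in>{1..t - w}. S a \<in> carrier_mat m n) \<longrightarrow>
             (\<exists>X. is_solution fs t w lam mu m n F G N X \<and> (\<forall>a\<in>{1..t - w}. X (js a) = S a)) \<and>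
             (\<forall>X Y. is_solution fs t w lam mu m n F G N X \<and> (\<forall>a\<in>{1..t - w}. X (js a) = S a) \<and>
                    is_solution fs t w lam mu m n F G N Y \<and> (\<forall>a\<in>{1..t - w}. Y (js a) = S a)
                    \<longrightarrow> (\<forall>j\<in>{1..t}. X j = Y j)))"
    proof (rule ballI)
      fix P assume P: "P \<in> D'"
      obtain lam mu where Pl: "P = (lam, mu)" by (cases P)
      show "case P of (lam, mu) \<Rightarrow> \<forall>m n F G N.
        admissible m n F G \<and> (\<forall>i\<in>{1..w}. N i \<in> carrier_mat m n) \<longrightarrow>
          solvable fs t w lam mu m n F G N \<and>
          (\<forall>S. (\<forall>a\<in>{1..t - w}. S a \<in> carrier_mat m n) \<longrightarrow>
             (\<exists>X. is_solution fs t w lam mu m n F G N X \<and> (\<forall>a\<in>{1..t - w}. X (js a) = S a)) \<and>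
             (\<forall>X Y. is_solution fs t w lam mu m n F G N X \<and> (\<forall>a\<in>{1..t - w}. X (js a) = S a) \<and>
                    is_solution fs t w lam mu m n F G N Y \<and> (\<forall>a\<in>{1..t - w}. Y (js a) = S a)
                    \<longrightarrow> (\<forall>j\<in>{1..t}. X j = Y j)))"
        unfolding Pl case_prod_conv
        by (intro allI impI, rule part_i) (use P Pl in auto)
    qed
    show "\<forall>(lam, mu)\<in>D'. \<forall>m n F G X.
        admissible m n F G \<and> is_solution fs t w lam mu m n F G (\<lambda>_. 0\<^sub>m m n) X \<longrightarrow>
          (\<exists>S\<in>carrier_mat m n.
             sys_lhs fs t (w + 1) lam mu m n F G X =
             polyapp (lam \<cdot>\<^sub>m 1\<^sub>m m + F) (mu \<cdot>\<^sub>m 1\<^sub>m n + G) d S)"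
    proof (rule ballI)
      fix P assume P: "P \<in> D'"
      obtain lam mu where Pl: "P = (lam, mu)" by (cases P)
      show "case P of (lam, mu) \<Rightarrow> \<forall>m n F G X.
        admissible m n F G \<and> is_solution fs t w lam mu m n F G (\<lambda>_. 0\<^sub>m m n) X \<longrightarrow>
          (\<exists>S\<in>carrier_mat m n.
             sys_lhs fs t (w + 1) lam mu m n F G X =
             polyapp (lam \<cdot>\<^sub>m 1\<^sub>m m + F) (mu \<cdot>\<^sub>m 1\<^sub>m n + G) d S)"
        unfolding Pl case_prod_conv
        by (intro allI impI, rule part_ii) (use P Pl in auto)
    qed
  qed
qed


end
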